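(* Let $X$ be the Cantor set, $\alpha$ a minimal homeomorphism of $X$, and $\phi:X\to\operatorname{Isom}(\mathbb{T})$ continuous such that $\alpha\times\phi$ is minimal and not orientation preserving. For any $x_0\in X$, $m\in\mathbb{Z}$ and nonempty clopen $O\subset X$, there exists a clopen set $U\subset O$ such that $1_U$ is equivalent to $mh_\phi$ in $K_1(A_{x_0})$. Moreover, there exists $\sigma\in[[\alpha]]$ such that $\sigma(x)=x$ for all $x\notin U$ and $\sigma_\phi^*(1_U)=-1_U$.
   Context: $\alpha\times\phi:(x,t)\mapsto(\alpha(x),\phi_x(t))$; $o(\phi)(x)=0$ if $\phi_x$ preserves orientation, $1$ otherwise; orientation preserving means $o(\phi)\in\{f-f\circ\alpha^{-1}:f\in C(X,\mathbb{Z}_2)\}$. $\alpha_\phi^*$ is the automorphism of $C(X,\mathbb{Z})$ given by $\alpha_\phi^*(f)(x)=(-1)^{o(\phi)(\alpha^{-1}(x))}f(\alpha^{-1}(x))$. $K_1(A_{x_0})$ is identified with $C(X,\mathbb{Z})/\{f-\alpha_\phi^*(f):f\in C(X,\mathbb{Z}),f(x_0)=0\}$ (where $A_{x_0}$ is the subalgebra of the crossed product generated by $C(X\times\mathbb{T})$ and $uC_0((X\setminus\{x_0\})\times\mathbb{T})$), and "equivalent in $K_1(A_{x_0})$" means equal images in this quotient. $h_\phi(x)=1$ if $o(\phi)(\alpha^{-1}(x))=1$, $0$ otherwise. $[[\alpha]]$ (topological full group) is the set of homeomorphisms $\sigma$ of $X$ for which there is a continuous $n:X\to\mathbb{Z}$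 with $\sigma(x)=\alpha^{n(x)}(x)$; for such $\sigma$, $\sigma_\phi^*(f)=\sum_{k\in\mathbb{Z}}(\alpha_\phi^* )^k(f1_{n^{-1}(k)})$ for $f\in C(X,\mathbb{Z})$. *)

theory Defs
  imports "HOL-Analysis.Analysis"
begin

definition Cantor :: "(nat \<Rightarrow> bool) topology" where
  "Cantor = product_topology (\<lambda>_. discrete_topology (UNIV :: bool set)) UNIV"

type_synonym cantor = "nat \<Rightarrow> bool"

definition Circ :: "complex set" where
  "Circ = sphere 0 1"

text \<open>Isometries of the circle (onto isometries of T; only values on T matter).\<close>
definition circle_isom :: "(complex \<Rightarrow> complex) \<Rightarrow> bool" where
  "circle_isom f \<longleftrightarrow> f ` Circ = Circ \<and> (\<forall>z\<in>Circ. \<forall>w\<in>Circ. dist (f z) (f w) = dist z w)"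

text \<open>An isometry of T preserves orientation iff it is a rotation.\<close>
definition preserves_orientation :: "(complex \<Rightarrow> complex) \<Rightarrow> bool" where
  "preserves_orientation f \<longleftrightarrow> (\<exists>c. \<forall>z\<in>Circ. f z = c * z)"

definition zpow :: "('a \<Rightarrow> 'a) \<Rightarrow> ('a \<Rightarrow> 'a) \<Rightarrow> int \<Rightarrow> 'a \<Rightarrow> 'a" where
  "zpow f g n = (if 0 \<le> n then f ^^ nat n else g ^^ nat (- n))"

definition minimal_homeo :: "'a topology \<Rightarrow> ('a \<Rightarrow> 'a) \<Rightarrow> bool" where
  "minimal_homeo T f \<longleftrightarrow> homeomorphic_map T T f \<and>
     (\<forall>A. closedin T A \<and> f ` A = A \<longrightarrow> A = {} \<or> A = topspace T)"

definition skew :: "(cantor \<Rightarrow> cantor) \<Rightarrow> (cantor \<Rightarrow> complex \<Rightarrow> complex)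
    \<Rightarrow> cantor \<times> complex \<Rightarrow> cantor \<times> complex" where
  "skew \<alpha> \<phi> = (\<lambda>(x, t). (\<alpha> x, \<phi> x t))"

text \<open>o(phi)(x) : True stands for 1 in Z_2 (phi_x reverses orientation).\<close>
definition orient :: "(cantor \<Rightarrow> complex \<Rightarrow> complex) \<Rightarrow> cantor \<Rightarrow> bool" where
  "orient \<phi> x \<longleftrightarrow> \<not> preserves_orientation (\<phi> x)"

text \<open>alpha x phi orientation preserving: o(phi) = f - f o alpha^{-1} for some f in C(X,Z_2)
  (subtraction in Z_2 is exclusive or).\<close>
definition orientation_preserving ::
    "(cantor \<Rightarrow> cantor) \<Rightarrow> (cantor \<Rightarrow> complex \<Rightarrow> complex) \<Rightarrow> bool" where
  "orientation_preserving \<alpha> \<phi> \<longleftrightarrow>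
     (\<exists>f :: cantor \<Rightarrow> bool. continuous_map Cantor (discrete_topology UNIV) f \<and>
        (\<forall>x. orient \<phi> x \<longleftrightarrow> (f x \<noteq> f (inv \<alpha> x))))"

definition CZ :: "(cantor \<Rightarrow> int) set" where
  "CZ = {f. continuous_map Cantor euclidean f}"

definition astar :: "(cantor \<Rightarrow> cantor) \<Rightarrow> (cantor \<Rightarrow> complex \<Rightarrow> complex)
    \<Rightarrow> (cantor \<Rightarrow> int) \<Rightarrow> cantor \<Rightarrow> int" where
  "astar \<alpha> \<phi> f x = (if orient \<phi> (inv \<alpha> x) then -1 else 1) * f (inv \<alpha> x)"

definition astar_inv :: "(cantor \<Rightarrow> cantor) \<Rightarrow> (cantor \<Rightarrow> complex \<Rightarrow> complex)
    \<Rightarrow> (cantor \<Rightarrow> int) \<Rightarrow> cantor \<Rightarrow> int" where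
  "astar_inv \<alpha> \<phi> f x = (if orient \<phi> x then -1 else 1) * f (\<alpha> x)"

definition hphi :: "(cantor \<Rightarrow> cantor) \<Rightarrow> (cantor \<Rightarrow> complex \<Rightarrow> complex) \<Rightarrow> cantor \<Rightarrow> int" where
  "hphi \<alpha> \<phi> x = (if orient \<phi> (inv \<alpha> x) then 1 else 0)"

text \<open>Equality of images in K_1(A_{x0}) = C(X,Z) / {f - alpha_phi^* f : f in C(X,Z), f(x0)=0}.\<close>
definition K1_equiv :: "(cantor \<Rightarrow> cantor) \<Rightarrow> (cantor \<Rightarrow> complex \<Rightarrow> complex) \<Rightarrow> cantor
    \<Rightarrow> (cantor \<Rightarrow> int) \<Rightarrow> (cantor \<Rightarrow> int) \<Rightarrow> bool" where
  "K1_equiv \<alpha> \<phi> x0 g1 g2 \<longleftrightarrow>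
     (\<exists>f\<in>CZ. f x0 = 0 \<and> (\<forall>x. g1 x - g2 x = f x - astar \<alpha> \<phi> f x))"

definition full_group_cocycle :: "(cantor \<Rightarrow> cantor) \<Rightarrow> (cantor \<Rightarrow> cantor) \<Rightarrow> (cantor \<Rightarrow> int) \<Rightarrow> bool" where
  "full_group_cocycle \<alpha> \<sigma> n \<longleftrightarrow> homeomorphic_map Cantor Cantor \<sigma> \<and> n \<in> CZ \<and>
     (\<forall>x. \<sigma> x = zpow \<alpha> (inv \<alpha>) (n x) x)"

definition full_group :: "(cantor \<Rightarrow> cantor) \<Rightarrow> (cantor \<Rightarrow> cantor) set" where
  "full_group \<alpha> = {\<sigma>. \<exists>n. full_group_cocycle \<alpha> \<sigma> n}"

text \<open>sigma_phi^* f = sum_k (alpha_phi^*)^k (f 1_{n^{-1}(k)}); n has finite range (X compact).\<close>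
definition sstar :: "(cantor \<Rightarrow> cantor) \<Rightarrow> (cantor \<Rightarrow> complex \<Rightarrow> complex) \<Rightarrow> (cantor \<Rightarrow> int)
    \<Rightarrow> (cantor \<Rightarrow> int) \<Rightarrow> cantor \<Rightarrow> int" where
  "sstar \<alpha> \<phi> n f y = (\<Sum>k\<in>range n.
      zpow (astar \<alpha> \<phi>) (astar_inv \<alpha> \<phi>) k (\<lambda>x. f x * indicator (n -` {k}) x) y)"

end

theory Submission
  imports Defs
begin

lemma topspace_Cantor[simp]: "topspace Cantor = UNIV"
  by (auto simp: Cantor_def)

lemma compact_Cantor: "compact_space Cantor"
  unfolding Cantor_def by (simp add: compact_space_product_topology compact_space_discrete_topology)

lemma Hausdorff_Cantor: "Hausdorff_space Cantor"
  unfolding Cantor_def by (simp add: Hausdorff_space_product_topology)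

lemma cyl_open: "openin Cantor {y. y n = b}"
proof -
  have "continuous_map Cantor (discrete_topology UNIV) (\<lambda>y. y n)"
    unfolding Cantor_def by (rule continuous_map_product_projection) simp
  then have "openin Cantor {x \<in> topspace Cantor. x n \<in> {b}}"
    by (rule openin_continuous_map_preimage) simp
  then show ?thesis by simp
qed

lemma cyl_closed: "closedin Cantor {y. y n = b}"
proof -
  have "continuous_map Cantor (discrete_topology UNIV) (\<lambda>y. y n)"
    unfolding Cantor_def by (rule continuous_map_product_projection) simp
  then have "closedin Cantor {x \<in> topspace Cantor. x n \<in> {b}}"
    by (rule closedin_continuous_map_preimage) simp
  then show ?thesis by simp
qed

definition clopen :: "cantor set \<Rightarrow> bool" where
  "clopen S \<longleftrightarrow> openin Cantor S \<and> closedin Cantor S"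

lemma clopen_Int: "clopen A \<Longrightarrow> clopen B \<Longrightarrow> clopen (A \<inter> B)"
  by (auto simp: clopen_def)
lemma clopen_Un: "clopen A \<Longrightarrow> clopen B \<Longrightarrow> clopen (A \<union> B)"
  by (auto simp: clopen_def)
lemma clopen_Compl: "clopen A \<Longrightarrow> clopen (- A)"
proof -
  assume "clopen A"
  moreover have "openin Cantor UNIV" "closedin Cantor UNIV"
    using openin_topspace[of Cantor] closedin_topspace[of Cantor] by simp_all
  ultimately show ?thesis unfolding clopen_def
    using openin_diff[of Cantor UNIV A] closedin_diff[of Cantor UNIV A]
    by (auto simp: Compl_eq_Diff_UNIV)
qed
lemma clopen_Diff: "clopen A \<Longrightarrow> clopen B \<Longrightarrow> clopen (A - B)"
  by (simp add: Diff_eq clopen_Compl clopen_Int)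
lemma clopen_empty[simp]: "clopen {}" and clopen_UNIV[simp]: "clopen UNIV"
  by (auto simp: clopen_def  simp flip: topspace_Cantor)

lemma clopen_cyl: "clopen {y. y n = b}"
  by (simp add: clopen_def cyl_open cyl_closed)

lemma clopen_sep: "p \<noteq> x \<Longrightarrow> \<exists>C. clopen C \<and> p \<in> C \<and> x \<notin> C"
proof -
  assume "p \<noteq> x"
  then obtain n where "p n \<noteq> x n" by auto
  then show ?thesis by (intro exI[of _ "{y. y n = p n}"]) (auto simp: clopen_cyl)
qed

lemma clopen_avoid: "finite S \<Longrightarrow> p \<notin> S \<Longrightarrow> \<exists>C. clopen C \<and> p \<in> C \<and> C \<inter> S = {}"
proof (induction S rule: finite_induct)
  case empty
  then show ?case by (intro exI[of _ UNIV]) auto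
next
  case (insert x F)
  then obtain C where C: "clopen C" "p \<in> C" "C \<inter> F = {}" by auto
  obtain D where D: "clopen D" "p \<in> D" "x \<notin> D" using clopen_sep[of p x] insert.prems by auto
  show ?case using C D by (intro exI[of _ "C \<inter> D"]) (auto simp: clopen_Int)
qed

lemma clopen_split:
  assumes "clopen V" "V \<noteq> {}"
  shows "\<exists>V1 V2. clopen V1 \<and> clopen V2 \<and> V1 \<noteq> {} \<and> V2 \<noteq> {} \<and> V1 \<inter> V2 = {} \<and> V1 \<union> V2 \<subseteq> V"
proof -
  obtain v where v: "v \<in> V" using assms by auto
  have "openin (product_topology (\<lambda>_. discrete_topology (UNIV::bool set)) UNIV) V"
    using assms by (simp add: clopen_def Cantor_def)
  then obtain W where W: "finite {i \<in> UNIV. W i \<noteq> topspace (discrete_topology (UNIV::bool set))}"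
      "v \<in> Pi\<^sub>E UNIV W" "Pi\<^sub>E UNIV W \<subseteq> V"
    using v unfolding openin_product_topology_alt by blast
  then have fin: "finite {i. W i \<noteq> UNIV}" by simp
  obtain i where i: "W i = UNIV"
    using ex_new_if_finite[OF infinite_UNIV_nat fin] by auto
  define v' where "v' = v(i := \<not> v i)"
  have "v' \<in> Pi\<^sub>E UNIV W" using W(2) i by (auto simp: v'_def)
  then have "v' \<in> V" using W(3) by auto
  have "v \<noteq> v'" by (auto simp: v'_def fun_eq_iff)
  then obtain C where C: "clopen C" "v \<in> C" "v' \<notin> C" using clopen_sep by metis
  show ?thesis
    using C \<open>v' \<in> V\<close> v assms(1)
    by (intro exI[of _ "V \<inter> C"] exI[of _ "V - C"]) (auto simp: clopen_Int clopen_Diff)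
qed

lemma funpow_inv_cancel:
  fixes f :: "'a \<Rightarrow> 'a"
  assumes "bij f"
  shows "(inv f ^^ j) ((f ^^ (j + i)) y) = (f ^^ i) y"
proof (induction j arbitrary: y)
  case 0 then show ?case by simp
next
  case (Suc j)
  have e1: "(inv f ^^ Suc j) z = (inv f ^^ j) (inv f z)" for z
    by (simp only: funpow_Suc_right o_apply)
  have e2: "(f ^^ (Suc j + i)) y = f ((f ^^ (j + i)) y)" by simp
  have "(inv f ^^ Suc j) ((f ^^ (Suc j + i)) y) = (inv f ^^ j) (inv f (f ((f ^^ (j + i)) y)))"
    by (simp only: e1 e2)
  also have "\<dots> = (inv f ^^ j) ((f ^^ (j + i)) y)"
    using assms by (simp add: bij_is_inj)
  finally show ?case using Suc by simp
qed

lemma funpow_inv_cancel':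
  fixes f :: "'a \<Rightarrow> 'a"
  assumes "bij f"
  shows "(f ^^ j) ((inv f ^^ (j + i)) y) = (inv f ^^ i) y"
proof -
  have "bij (inv f)" using assms by (simp add: bij_imp_bij_inv)
  from funpow_inv_cancel[OF this, of j i y] show ?thesis
    using assms by (simp add: inv_inv_eq)
qed

lemma funpow_inv_cancel0:
  fixes f :: "'a \<Rightarrow> 'a"
  assumes "bij f" shows "(inv f ^^ j) ((f ^^ j) y) = y"
  using funpow_inv_cancel[of f j 0 y] assms by simp
lemma funpow_inv_cancel0':
  fixes f :: "'a \<Rightarrow> 'a"
  assumes "bij f" shows "(f ^^ j) ((inv f ^^ j) y) = y"
  using funpow_inv_cancel'[of f j 0 y] assms by simp

lemma continuous_map_funpow:
  "continuous_map X X f \<Longrightarrow> continuous_map X X (f ^^ n)"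
  by (induction n) (auto intro: continuous_map_compose)

definition minimal_on :: "'a topology \<Rightarrow> ('a \<Rightarrow> 'a) \<Rightarrow> bool" where
  "minimal_on X T \<longleftrightarrow> (\<forall>A. closedin X A \<and> T ` A = A \<longrightarrow> A = {} \<or> A = topspace X)"

lemma hit_forward:
  assumes top: "topspace X = UNIV" and cpt: "compact_space X"
    and bij: "bij T" and cT: "continuous_map X X T" and cT': "continuous_map X X (inv T)"
    and mini: "minimal_on X T"
    and W: "openin X W" "W \<noteq> {}"
  shows "\<exists>j\<ge>1. (T ^^ j) y \<in> W"
proof -
  define E where "E = (\<Inter>j. {y. (T ^^ j) y \<notin> W} \<inter> {y. (inv T ^^ j) y \<notin> W})"
  have cl: "closedin X ({y. (T ^^ j) y \<notin> W} \<inter> {y. (inv T ^^ j) y \<notin> W})" for j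
  proof -
    have "closedin X (topspace X - W)" using W(1) openin_closedin_eq by blast
    then have cW: "closedin X (UNIV - W)" using top by simp
    have "closedin X {y \<in> topspace X. (T ^^ j) y \<in> UNIV - W}"
      by (rule closedin_continuous_map_preimage[OF continuous_map_funpow[OF cT] cW])
    moreover have "closedin X {y \<in> topspace X. (inv T ^^ j) y \<in> UNIV - W}"
      by (rule closedin_continuous_map_preimage[OF continuous_map_funpow[OF cT'] cW])
    ultimately show ?thesis using top by (simp add: closedin_Int)
  qed
  have clE: "closedin X E" unfolding E_def by (rule closedin_INT) (use cl in auto)
  have sub: "T y \<in> E" if "y \<in> E" for y
  proof -
    have "(T ^^ j) (T y) \<notin> W" for j
    proof -
      have "(T ^^ j) (T y) = (T ^^ Suc j) y" by (metis comp_apply funpow_Suc_right)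
      moreover have "(T ^^ Suc j) y \<notin> W" using that unfolding E_def by blast
      ultimately show ?thesis by simp
    qed
    moreover have "(inv T ^^ j) (T y) \<notin> W" for j
    proof (cases j)
      case 0
      have "(T ^^ 1) y \<notin> W" using that unfolding E_def by blast
      then show ?thesis using 0 by simp
    next
      case (Suc i)
      have "(inv T ^^ j) (T y) = (inv T ^^ i) y"
        using bij by (metis Suc comp_apply funpow_Suc_right bij_is_inj inv_f_f)
      moreover have "(inv T ^^ i) y \<notin> W" using that unfolding E_def by blast
      ultimately show ?thesis by simp
    qed
    ultimately show ?thesis unfolding E_def by blast
  qed
  have sub2: "inv T y \<in> E" if "y \<in> E" for y
  proof -
    have "(inv T ^^ j) (inv T y) \<notin> W" for j
    proof -
      have "(inv T ^^ j) (inv T y) = (inv T ^^ Suc j) y" by (metis comp_apply funpow_Suc_right)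
      moreover have "(inv T ^^ Suc j) y \<notin> W" using that unfolding E_def by blast
      ultimately show ?thesis by simp
    qed
    moreover have "(T ^^ j) (inv T y) \<notin> W" for j
    proof (cases j)
      case 0
      have "(inv T ^^ 1) y \<notin> W" using that unfolding E_def by blast
      then show ?thesis using 0 by simp
    next
      case (Suc i)
      have "(T ^^ j) (inv T y) = (T ^^ i) y"
        using bij by (metis Suc comp_apply funpow_Suc_right bij_is_surj surj_f_inv_f)
      moreover have "(T ^^ i) y \<notin> W" using that unfolding E_def by blast
      ultimately show ?thesis by simp
    qed
    ultimately show ?thesis unfolding E_def by blast
  qed
  have "T ` E = E"
  proof
    show "T ` E \<subseteq> E" using sub by auto
    show "E \<subseteq> T ` E"
    proof
      fix y assume "y \<in> E"
      then have "inv T y \<in> E" by (rule sub2)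
      moreover have "T (inv T y) = y" using bij by (simp add: bij_is_surj surj_f_inv_f)
      ultimately show "y \<in> T ` E" by (metis image_eqI)
    qed
  qed
  then have "E = {} \<or> E = UNIV" using mini clE top unfolding minimal_on_def by auto
  moreover obtain w where "w \<in> W" using W by auto
  then have "w \<notin> E"
  proof -
    have "(T ^^ 0) w \<in> W" using \<open>w \<in> W\<close> by simp
    then show ?thesis unfolding E_def by blast
  qed
  ultimately have E0: "E = {}" by auto
  define P where "P j = {y. (T ^^ j) y \<in> W} \<union> {y. (inv T ^^ j) y \<in> W}" for j
  have opP: "openin X (P j)" for j
  proof -
    have "openin X {y \<in> topspace X. (T ^^ j) y \<in> W}"
      by (rule openin_continuous_map_preimage[OF continuous_map_funpow[OF cT] W(1)])
    moreover have "openin X {y \<in> topspace X. (inv T ^^ j) y \<in> W}"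
      by (rule openin_continuous_map_preimage[OF continuous_map_funpow[OF cT'] W(1)])
    ultimately show ?thesis using top unfolding P_def by (simp add: openin_Un Collect_disj_eq)
  qed
  have cov: "topspace X \<subseteq> \<Union>(range P)"
  proof
    fix z assume "z \<in> topspace X"
    have "z \<notin> E" using E0 by simp
    then obtain j where "(T ^^ j) z \<in> W \<or> (inv T ^^ j) z \<in> W" unfolding E_def by blast
    then have "z \<in> P j" unfolding P_def by blast
    then show "z \<in> \<Union>(range P)" by blast
  qed
  have opP': "\<forall>U\<in>range P. openin X U" using opP by blast
  obtain F where F: "finite F" "F \<subseteq> range P" "topspace X \<subseteq> \<Union>F"
    using cpt[unfolded compact_space_alt, rule_format, OF conjI[OF opP' cov]] by blast
  obtain J where J: "finite J" "F = P ` J"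
    using finite_subset_image[OF F(1) F(2)] by blast
  define M where "M = Max (insert 0 J)"
  have bnd: "\<exists>j\<le>M. z \<in> P j" for z
  proof -
    have "z \<in> \<Union>(P ` J)" using F(3) J(2) top by blast
    then obtain j where jj: "j \<in> J" "z \<in> P j" by blast
    moreover have "j \<le> M" unfolding M_def using J(1) jj(1) by (intro Max_ge) auto
    ultimately show ?thesis by blast
  qed
  obtain j where j: "j \<le> M" "(T ^^ Suc M) y \<in> P j" using bnd by blast
  show ?thesis
  proof (cases "(T ^^ j) ((T ^^ Suc M) y) \<in> W")
    case True
    have eq: "(T ^^ (j + Suc M)) y = (T ^^ j) ((T ^^ Suc M) y)" by (simp only: funpow_add o_apply)
    have "1 \<le> j + Suc M" by simp
    moreover have "(T ^^ (j + Suc M)) y \<in> W" using True eq by simp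
    ultimately show ?thesis by blast
  next
    case False
    then have inW: "(inv T ^^ j) ((T ^^ Suc M) y) \<in> W" using j unfolding P_def by blast
    have jj: "j + (Suc M - j) = Suc M" using j by simp
    have "(inv T ^^ j) ((T ^^ (j + (Suc M - j))) y) = (T ^^ (Suc M - j)) y"
      by (rule funpow_inv_cancel[OF bij])
    then have "(T ^^ (Suc M - j)) y \<in> W" using inW by (simp only: jj)
    moreover have "1 \<le> Suc M - j" using j by simp
    ultimately show ?thesis by blast
  qed
qed

lemma hit_backward:
  assumes top: "topspace X = UNIV" and cpt: "compact_space X"
    and bij: "bij T" and cT: "continuous_map X X T" and cT': "continuous_map X X (inv T)"
    and mini: "minimal_on X T"
    and W: "openin X W" "W \<noteq> {}"
  shows "\<exists>j\<ge>1. (inv T ^^ j) y \<in> W"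
proof -
  have b': "bij (inv T)" using bij by (simp add: bij_imp_bij_inv)
  have ii: "inv (inv T) = T" using bij by (simp add: inv_inv_eq)
  have m': "minimal_on X (inv T)"
    unfolding minimal_on_def
  proof (intro allI impI)
    fix A assume A: "closedin X A \<and> inv T ` A = A"
    have ti: "T \<circ> inv T = id" using bij by (simp add: bij_is_surj surj_iff_all fun_eq_iff surj_f_inv_f)
    have "T ` A = T ` (inv T ` A)" using A by simp
    also have "\<dots> = A" by (simp add: image_comp ti)
    finally have "T ` A = A" .
    then show "A = {} \<or> A = topspace X" using A mini unfolding minimal_on_def by auto
  qed
  have cT'': "continuous_map X X (inv (inv T))" using cT ii by simp
  show ?thesis
    by (rule hit_forward[OF top cpt b' cT' cT'' m' W])
qed

lemma unit_eq_lemma: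
  fixes a b :: complex
  assumes "cmod a = 1" "cmod b = 1" "cmod (a - 1) = cmod (b - 1)" "cmod (a - \<i>) = cmod (b - \<i>)"
  shows "a = b"
proof -
  have e1: "Re a ^ 2 + Im a ^ 2 = 1" "Re b ^ 2 + Im b ^ 2 = 1"
    using assms(1,2) cmod_power2[of a] cmod_power2[of b] by simp_all
  have "(cmod (a - 1))^2 = (cmod (b - 1))^2" using assms(3) by simp
  then have e2: "(Re a - 1) ^ 2 + Im a ^ 2 = (Re b - 1) ^ 2 + Im b ^ 2"
    by (simp add: cmod_power2)
  have "(cmod (a - \<i>))^2 = (cmod (b - \<i>))^2" using assms(4) by simp
  then have e3: "Re a ^ 2 + (Im a - 1) ^ 2 = Re b ^ 2 + (Im b - 1) ^ 2"
    by (simp add: cmod_power2)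
  have "Re a = Re b" using e1 e2 by (simp add: power2_eq_square algebra_simps)
  moreover have "Im a = Im b" using e1 e3 by (simp add: power2_eq_square algebra_simps)
  ultimately show ?thesis by (simp add: complex_eq_iff)
qed

lemma Circ_iff: "z \<in> Circ \<longleftrightarrow> cmod z = 1"
  by (simp add: Circ_def)

lemma circ_cases:
  assumes "circle_isom f"
  shows "(f \<i> = \<i> * f 1 \<and> preserves_orientation f) \<or> (f \<i> = - \<i> * f 1 \<and> \<not> preserves_orientation f)"
proof -
  have img: "z \<in> Circ \<Longrightarrow> f z \<in> Circ" for z using assms unfolding circle_isom_def by blast
  have iso: "z \<in> Circ \<Longrightarrow> w \<in> Circ \<Longrightarrow> cmod (f z - f w) = cmod (z - w)" for z w
    using assms unfolding circle_isom_def by (simp add: dist_norm)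
  have one: "(1::complex) \<in> Circ" and ii: "\<i> \<in> Circ" by (simp_all add: Circ_iff)
  define c where "c = f 1"
  have c1: "cmod c = 1" using img[OF one] by (simp add: c_def Circ_iff)
  then have cnz: "c \<noteq> 0" by auto
  define w where "w = f \<i> / c"
  have w1: "cmod w = 1" using img[OF ii] c1 by (simp add: w_def Circ_iff norm_divide)
  have "cmod (f \<i> - c) = cmod (\<i> - 1)" using iso[OF ii one] by (simp add: c_def)
  moreover have "f \<i> - c = c * (w - 1)" using cnz by (simp add: w_def field_simps)
  ultimately have "cmod (w - 1) = cmod (\<i> - 1)" using c1 by (simp add: norm_mult)
  then have "(cmod (w - 1))^2 = (cmod (\<i> - 1))^2" by simp
  then have "(Re w - 1)^2 + Im w ^2 = 2" by (simp add: cmod_power2)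
  moreover have "Re w ^ 2 + Im w ^ 2 = 1" using w1 cmod_power2[of w] by simp
  ultimately have "Re w = 0" "Im w ^ 2 = 1" by (simp_all add: power2_eq_square algebra_simps)
  then have "Im w = 1 \<or> Im w = -1" by (metis power2_eq_1_iff)
  then have wcases: "w = \<i> \<or> w = - \<i>" using \<open>Re w = 0\<close> by (auto simp: complex_eq_iff)
  have fi: "f \<i> = w * c" using cnz by (simp add: w_def)
  show ?thesis
  proof (cases "w = \<i>")
    case True
    have "f z = c * z" if z: "z \<in> Circ" for z
    proof -
      define g where "g = f z / c"
      have fz: "f z = c * g" using cnz by (simp add: g_def)
      have g1: "cmod g = 1" using img[OF z] c1 by (simp add: g_def Circ_iff norm_divide)
      have "cmod (f z - f 1) = cmod (z - 1)" using iso[OF z one] .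
      moreover have "f z - f 1 = c * (g - 1)" by (simp add: fz c_def[symmetric] algebra_simps)
      ultimately have a: "cmod (g - 1) = cmod (z - 1)"
        using c1 by (simp add: norm_mult)
      have "cmod (f z - f \<i>) = cmod (z - \<i>)" using iso[OF z ii] .
      moreover have "f z - f \<i> = c * (g - \<i>)" using True fi by (simp add: fz algebra_simps)
      ultimately have b: "cmod (g - \<i>) = cmod (z - \<i>)"
        using c1 by (simp add: norm_mult)
      have "g = z" by (rule unit_eq_lemma[OF g1 _ a b]) (use z in \<open>simp add: Circ_iff\<close>)
      then show ?thesis using fz by simp
    qed
    then have "preserves_orientation f" unfolding preserves_orientation_def by blast
    then show ?thesis using True fi c_def by (simp add: mult.commute)
  next
    case False
    then have wm: "w = - \<i>" using wcases by auto
    have "\<not> preserves_orientation f"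
    proof
      assume "preserves_orientation f"
      then obtain d where d: "\<forall>z\<in>Circ. f z = d * z" unfolding preserves_orientation_def by blast
      then have "d = c" using one by (simp add: c_def)
      then have "f \<i> = c * \<i>" using d ii by auto
      then show False using fi wm cnz by (simp add: complex_eq_iff)
    qed
    then show ?thesis using wm fi c_def by simp
  qed
qed

lemma compact_int_finite: "compact (S::int set) \<Longrightarrow> finite S"
proof -
  assume "compact S"
  moreover have "\<forall>c\<in>(\<lambda>x. {x}) ` S. open c" by (auto intro: open_discrete)
  moreover have "S \<subseteq> \<Union>((\<lambda>x. {x}) ` S)" by auto
  ultimately obtain D where D: "D \<subseteq> (\<lambda>x. {x}) ` S" "finite D" "S \<subseteq> \<Union>D"
    by (meson compactE)
  have "finite (\<Union>D)" using D by auto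
  then show ?thesis using D(3) finite_subset by blast
qed

lemma CZ_finite_range: "f \<in> CZ \<Longrightarrow> finite (range f)"
proof -
  assume "f \<in> CZ"
  then have "continuous_map Cantor euclidean f" by (simp add: CZ_def)
  then have "compactin euclidean (f ` topspace Cantor)"
    using compact_Cantor image_compactin compact_space_def by blast
  then have "compact (range f)" by (simp add: compactin_euclidean_iff)
  then show ?thesis by (rule compact_int_finite)
qed

lemma cont_int_iff:
  "continuous_map Cantor euclidean (f :: cantor \<Rightarrow> int) \<longleftrightarrow> (\<forall>k. openin Cantor {x. f x = k})"
proof
  assume c: "continuous_map Cantor euclidean f"
  show "\<forall>k. openin Cantor {x. f x = k}"
  proof
    fix k
    have "openin Cantor {x \<in> topspace Cantor. f x \<in> {k}}"
      by (rule openin_continuous_map_preimage[OF c]) (simp add: open_discrete)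
    then show "openin Cantor {x. f x = k}" by simp
  qed
next
  assume H: "\<forall>k. openin Cantor {x. f x = k}"
  show "continuous_map Cantor euclidean f"
    unfolding continuous_map_def
  proof (intro conjI allI impI)
    show "f \<in> topspace Cantor \<rightarrow> topspace euclidean" by simp
    fix U :: "int set" assume "openin euclidean U"
    have "{x \<in> topspace Cantor. f x \<in> U} = (\<Union>k\<in>U. {x. f x = k})" by auto
    also have "openin Cantor \<dots>" using H by blast
    finally show "openin Cantor {x \<in> topspace Cantor. f x \<in> U}" .
  qed
qed

lemma cont_int_clopen:
  assumes "continuous_map Cantor euclidean (f :: cantor \<Rightarrow> int)"
  shows "clopen {x. f x \<in> S}"
proof -
  have "openin Cantor {x \<in> topspace Cantor. f x \<in> S}"
    by (rule openin_continuous_map_preimage[OF assms]) (simp add: open_discrete)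
  moreover have "closedin Cantor {x \<in> topspace Cantor. f x \<in> S}"
    by (rule closedin_continuous_map_preimage[OF assms]) (simp add: closed_def open_discrete)
  ultimately show ?thesis by (simp add: clopen_def)
qed

lemma cont_levels:
  assumes "\<And>k. openin Cantor {x. l x = k}" "\<And>k. continuous_map Cantor Y (H k)"
  shows "continuous_map Cantor Y (\<lambda>x. H (l x) x)"
  unfolding continuous_map_def
proof (intro conjI allI impI)
  show "(\<lambda>x. H (l x) x) \<in> topspace Cantor \<rightarrow> topspace Y"
    using assms(2) by (auto simp: continuous_map_def Pi_iff)
  fix U assume U: "openin Y U"
  have "{x \<in> topspace Cantor. H (l x) x \<in> U} = (\<Union>k. {x. l x = k} \<inter> {x \<in> topspace Cantor. H k x \<in> U})"
    by auto
  also have "openin Cantor \<dots>"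
    using assms openin_continuous_map_preimage[OF assms(2) U] by (intro openin_Union) auto
  finally show "openin Cantor {x \<in> topspace Cantor. H (l x) x \<in> U}" .
qed

lemma cont_const_int: "continuous_map Cantor euclidean (\<lambda>x. (c::int))" by simp

lemma cont_int_comb2:
  assumes "continuous_map Cantor euclidean (f :: cantor \<Rightarrow> int)" "continuous_map Cantor euclidean (g :: cantor \<Rightarrow> int)"
  shows "continuous_map Cantor euclidean (\<lambda>x. (F (f x) (g x) :: int))"
proof -
  have "continuous_map Cantor euclidean (\<lambda>x. F a (g x))" for a
    using cont_levels[where l=g and H="\<lambda>b x. F a b" and Y=euclidean] assms(2) by (simp add: cont_int_iff)
  then show ?thesis using cont_levels[where l=f and H="\<lambda>a x. F a (g x)" and Y=euclidean] assms(1) by (simp add: cont_int_iff)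
qed

lemma cont_int_comp:
  assumes "continuous_map Cantor euclidean (f :: cantor \<Rightarrow> int)" "continuous_map Cantor Cantor h"
  shows "continuous_map Cantor euclidean (\<lambda>x. f (h x))"
  using continuous_map_compose[OF assms(2) assms(1)] by (simp add: o_def)

lemma cont_indicator: "clopen U \<Longrightarrow> continuous_map Cantor euclidean (indicator U :: cantor \<Rightarrow> int)"
proof -
  assume U: "clopen U"
  have "openin Cantor {x. (indicator U x :: int) = k}" for k
  proof -
    have "clopen (-U)" using U by (rule clopen_Compl)
    then show ?thesis using U
      by (cases "k = 0"; cases "k = 1") (auto simp: indicator_def clopen_def Compl_eq)
  qed
  then show ?thesis by (simp add: cont_int_iff)
qed

locale setting =
  fixes \<alpha> :: "cantor \<Rightarrow> cantor" and \<phi> :: "cantor \<Rightarrow> complex \<Rightarrow> complex"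
  assumes minA: "minimal_homeo Cantor \<alpha>"
    and iso: "\<forall>x. circle_isom (\<phi> x)"
    and contphi: "continuous_map (prod_topology Cantor (top_of_set Circ)) euclidean (\<lambda>(x, t). \<phi> x t)"
    and nop: "\<not> orientation_preserving \<alpha> \<phi>"
begin

lemma homA: "homeomorphic_map Cantor Cantor \<alpha>"
  using minA by (simp add: minimal_homeo_def)

lemma contA: "continuous_map Cantor Cantor \<alpha>"
  using homA homeomorphic_imp_continuous_map by blast

lemma bijA: "bij \<alpha>"
proof -
  have "\<alpha> ` UNIV = UNIV" "inj_on \<alpha> UNIV"
    using homA unfolding homeomorphic_eq_everything_map by auto
  then show ?thesis by (simp add: bij_def)
qed

lemma contAi: "continuous_map Cantor Cantor (inv \<alpha>)"
proof -
  obtain g where g: "homeomorphic_maps Cantor Cantor \<alpha> g"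
    using homA homeomorphic_map_maps by blast
  then have "continuous_map Cantor Cantor g" "\<forall>y. \<alpha> (g y) = y"
    by (auto simp: homeomorphic_maps_def)
  moreover have "g y = inv \<alpha> y" for y
    using calculation(2) bijA by (metis bij_is_inj inv_f_f)
  ultimately show ?thesis by (metis ext)
qed

lemma minimal_onA: "minimal_on Cantor \<alpha>"
  using minA by (simp add: minimal_homeo_def minimal_on_def)

lemma inv_A_A[simp]: "inv \<alpha> (\<alpha> x) = x"
  using bijA by (simp add: bij_is_inj)
lemma A_inv_A[simp]: "\<alpha> (inv \<alpha> x) = x"
  using bijA by (simp add: bij_is_surj surj_f_inv_f)

lemma hitA_fwd: "clopen U \<Longrightarrow> U \<noteq> {} \<Longrightarrow> \<exists>j\<ge>1. (\<alpha> ^^ j) x \<in> U"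
  by (rule hit_forward[OF topspace_Cantor compact_Cantor bijA contA contAi minimal_onA])
     (auto simp: clopen_def)

lemma hitA_bwd: "clopen U \<Longrightarrow> U \<noteq> {} \<Longrightarrow> \<exists>j\<ge>1. (inv \<alpha> ^^ j) x \<in> U"
  by (rule hit_backward[OF topspace_Cantor compact_Cantor bijA contA contAi minimal_onA])
     (auto simp: clopen_def)

lemma cont_phi_at:
  assumes "t \<in> Circ"
  shows "continuous_map Cantor euclidean (\<lambda>x. \<phi> x t)"
proof -
  have "continuous_map Cantor (prod_topology Cantor (top_of_set Circ)) (\<lambda>x. (x, t))"
    using assms by (intro continuous_map_pairedI) auto
  from continuous_map_compose[OF this contphi] show ?thesis by (simp add: o_def)
qed

lemma cmult: "continuous_map X euclidean f \<Longrightarrow> continuous_map X euclidean (\<lambda>x. (c::complex) * f x)"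
  by (simp add: continuous_map_atin tendsto_mult_left)

lemma orient_iff: "orient \<phi> x \<longleftrightarrow> \<phi> x \<i> = - \<i> * \<phi> x 1"
proof -
  have "\<phi> x 1 \<noteq> 0"
  proof -
    have "(1::complex) \<in> Circ" by (simp add: Circ_iff)
    then have "\<phi> x 1 \<in> Circ" using iso unfolding circle_isom_def by blast
    then show ?thesis by (auto simp: Circ_iff)
  qed
  then have "\<i> * \<phi> x 1 \<noteq> - \<i> * \<phi> x 1" by simp
  then show ?thesis using circ_cases[of "\<phi> x"] iso unfolding orient_def by metis
qed

lemma not_orient_iff: "\<not> orient \<phi> x \<longleftrightarrow> \<phi> x \<i> = \<i> * \<phi> x 1"
proof -
  have "(1::complex) \<in> Circ" by (simp add: Circ_iff)
  then have "\<phi> x 1 \<in> Circ" using iso unfolding circle_isom_def by blast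
  then have "\<phi> x 1 \<noteq> 0" by (auto simp: Circ_iff)
  then have ne: "\<i> * \<phi> x 1 \<noteq> - \<i> * \<phi> x 1" by simp
  have "(\<phi> x \<i> = \<i> * \<phi> x 1 \<and> preserves_orientation (\<phi> x)) \<or> (\<phi> x \<i> = - \<i> * \<phi> x 1 \<and> \<not> preserves_orientation (\<phi> x))"
    using circ_cases iso by blast
  then show ?thesis unfolding orient_def using ne by auto
qed

lemma clopen_O: "clopen {x. orient \<phi> x}"
proof -
  have ci: "continuous_map Cantor euclidean (\<lambda>x. \<phi> x \<i>)" by (rule cont_phi_at) (simp add: Circ_iff)
  have c1: "continuous_map Cantor euclidean (\<lambda>x. \<phi> x 1)" by (rule cont_phi_at) (simp add: Circ_iff)
  have cl: "closedin Cantor {x. \<phi> x \<i> - c * \<phi> x 1 = 0}" for c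
  proof -
    have "continuous_map Cantor euclidean (\<lambda>x. \<phi> x \<i> - c * \<phi> x 1)"
      by (intro continuous_map_diff ci cmult c1)
    then have "closedin Cantor {x \<in> topspace Cantor. \<phi> x \<i> - c * \<phi> x 1 \<in> {0}}"
      by (rule closedin_continuous_map_preimage) simp
    then show ?thesis by simp
  qed
  have e1: "{x. orient \<phi> x} = {x. \<phi> x \<i> - (- \<i>) * \<phi> x 1 = 0}"
    by (simp only: orient_iff right_minus_eq)
  have e2: "- {x. orient \<phi> x} = {x. \<phi> x \<i> - \<i> * \<phi> x 1 = 0}"
    by (simp only: Collect_neg_eq[symmetric] not_orient_iff right_minus_eq)
  have c2: "closedin Cantor (- {x. orient \<phi> x})" using cl[of "\<i>"] unfolding e2 .
  have "openin Cantor (topspace Cantor - (- {x. orient \<phi> x}))"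
    by (rule openin_diff[OF openin_topspace c2])
  then have o1: "openin Cantor {x. orient \<phi> x}" by simp
  have c1: "closedin Cantor {x. orient \<phi> x}" using cl[of "- \<i>"] unfolding e1 .
  show ?thesis using o1 c1 by (simp add: clopen_def)
qed

definition sg :: "cantor \<Rightarrow> int" where
  "sg x = (if orient \<phi> x then -1 else 1)"

lemma cont_sg: "continuous_map Cantor euclidean sg"
proof -
  have "openin Cantor {x. sg x = k}" for k
  proof -
    have "{x. sg x = k} = (if k = -1 then {x. orient \<phi> x} else {}) \<union> (if k = 1 then - {x. orient \<phi> x} else {})"
      by (auto simp: sg_def)
    then show ?thesis using clopen_O clopen_Compl[OF clopen_O] by (simp add: clopen_def)
  qed
  then show ?thesis by (simp add: cont_int_iff)
qed

lemma sg_pm: "sg x = 1 \<or> sg x = -1" by (simp add: sg_def)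

definition cp :: "nat \<Rightarrow> cantor \<Rightarrow> int" where
  "cp k x = (\<Prod>j<k. sg ((\<alpha> ^^ j) x))"

lemma cp_0[simp]: "cp 0 x = 1" by (simp add: cp_def)

lemma cp_Suc: "cp (Suc k) x = cp k x * sg ((\<alpha> ^^ k) x)"
  by (simp add: cp_def)

lemma cp_Suc': "cp (Suc k) x = sg x * cp k (\<alpha> x)"
  unfolding cp_def prod.lessThan_Suc_shift by (simp add: funpow_Suc_right del: funpow.simps)

lemma cp_add: "cp (a + b) x = cp a x * cp b ((\<alpha> ^^ a) x)"
proof (induction b)
  case 0 then show ?case by simp
next
  case (Suc b)
  have e: "(\<alpha> ^^ (a + b)) x = (\<alpha> ^^ b) ((\<alpha> ^^ a) x)" by (metis add.commute funpow_add o_apply)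
  have "cp (a + Suc b) x = cp (a + b) x * sg ((\<alpha> ^^ (a + b)) x)" by (simp add: cp_Suc)
  also have "\<dots> = cp a x * (cp b ((\<alpha> ^^ a) x) * sg ((\<alpha> ^^ b) ((\<alpha> ^^ a) x)))"
    using Suc e by (simp add: mult.assoc)
  also have "\<dots> = cp a x * cp (Suc b) ((\<alpha> ^^ a) x)" by (simp add: cp_Suc)
  finally show ?case .
qed

lemma cp_pm: "cp k x = 1 \<or> cp k x = -1"
proof (induction k)
  case 0 then show ?case by simp
next
  case (Suc k) then show ?case using sg_pm[of "(\<alpha> ^^ k) x"] by (auto simp: cp_Suc)
qed

lemma cont_cp: "continuous_map Cantor euclidean (cp k)"
proof (induction k)
  case 0 then show ?case by (simp add: cp_def)
next
  case (Suc k)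
  have "continuous_map Cantor euclidean (\<lambda>x. sg ((\<alpha> ^^ k) x))"
    by (rule cont_int_comp[OF cont_sg continuous_map_funpow[OF contA]])
  from cont_int_comb2[OF Suc this, of "(*)"] show ?case by (simp add: cp_Suc[abs_def])
qed

end

abbreviation Yt :: "(cantor \<times> bool) topology" where
  "Yt \<equiv> prod_topology Cantor (discrete_topology UNIV)"

lemma topspace_Yt[simp]: "topspace Yt = UNIV" by simp

lemma compact_Yt: "compact_space Yt"
  by (simp add: compact_space_prod_topology compact_Cantor compact_space_discrete_topology)

lemma Hausdorff_Yt: "Hausdorff_space Yt"
  by (simp add: Hausdorff_space_prod_topology Hausdorff_Cantor)

lemma cont_to_bool:
  assumes "\<And>c. openin X {y \<in> topspace X. g y = c}"
  shows "continuous_map X (discrete_topology (UNIV::bool set)) g"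
  unfolding continuous_map_def
proof (intro conjI allI impI)
  show "g \<in> topspace X \<rightarrow> topspace (discrete_topology UNIV)" by simp
  fix U :: "bool set"
  have "{x \<in> topspace X. g x \<in> U} = (\<Union>c\<in>U. {y \<in> topspace X. g y = c})" by auto
  then show "openin X {x \<in> topspace X. g x \<in> U}" using assms by auto
qed

lemma clopen_preimage:
  assumes "clopen S" "continuous_map Cantor Cantor g"
  shows "clopen {x. g x \<in> S}"
  using openin_continuous_map_preimage[OF assms(2), of S] closedin_continuous_map_preimage[OF assms(2), of S] assms(1)
  by (simp add: clopen_def)

lemma yt_open: "openin Cantor S \<Longrightarrow> openin Yt (S \<times> B)"
  by (simp add: openin_prod_Times_iff)
lemma yt_closed: "closedin Cantor S \<Longrightarrow> closedin Yt (S \<times> B)"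
  by (simp add: closedin_prod_Times_iff)

context setting begin

lemma cont_lift:
  assumes h: "continuous_map Cantor Cantor h" and g: "continuous_map Cantor Cantor g"
  shows "continuous_map Yt Yt (\<lambda>(x, b). (h x, b \<noteq> orient \<phi> (g x)))"
proof -
  have c1: "continuous_map Yt Cantor (\<lambda>y. h (fst y))"
    using continuous_map_compose[OF continuous_map_fst h] by (simp add: o_def)
  have co: "clopen {x. g x \<in> {x. orient \<phi> x}}" by (rule clopen_preimage[OF clopen_O g])
  have c2: "continuous_map Yt (discrete_topology UNIV) (\<lambda>y. snd y \<noteq> orient \<phi> (g (fst y)))"
  proof (rule cont_to_bool)
    fix c
    have "{y \<in> topspace Yt. (snd y \<noteq> orient \<phi> (g (fst y))) = c} =
          ({x. g x \<in> {x. orient \<phi> x}} \<times> {\<not> c}) \<union> ((- {x. g x \<in> {x. orient \<phi> x}}) \<times> {c})"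
      by auto
    moreover have "openin Yt ({x. g x \<in> {x. orient \<phi> x}} \<times> {\<not> c})"
      using co by (intro yt_open) (simp add: clopen_def)
    moreover have "openin Yt ((- {x. g x \<in> {x. orient \<phi> x}}) \<times> {c})"
      using clopen_Compl[OF co] by (intro yt_open) (simp add: clopen_def)
    ultimately show "openin Yt {y \<in> topspace Yt. (snd y \<noteq> orient \<phi> (g (fst y))) = c}"
      by (simp add: openin_Un)
  qed
  have "continuous_map Yt Yt (\<lambda>y. (h (fst y), snd y \<noteq> orient \<phi> (g (fst y))))"
    by (rule continuous_map_pairedI[OF c1 c2])
  then show ?thesis by (simp add: case_prod_unfold)
qed

definition bt :: "cantor \<times> bool \<Rightarrow> cantor \<times> bool" where
  "bt = (\<lambda>(x, b). (\<alpha> x, b \<noteq> orient \<phi> x))"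

definition bti :: "cantor \<times> bool \<Rightarrow> cantor \<times> bool" where
  "bti = (\<lambda>(x, b). (inv \<alpha> x, b \<noteq> orient \<phi> (inv \<alpha> x)))"

lemma bt_bti[simp]: "bt (bti y) = y" and bti_bt[simp]: "bti (bt y) = y"
  by (auto simp: bt_def bti_def split: prod.splits)

lemma bij_bt: "bij bt"
  by (metis bij_betw_def bti_bt bt_bti inj_def surj_def)

lemma inv_bt: "inv bt = bti"
proof (rule ext)
  fix y show "inv bt y = bti y" by (rule inv_f_eq[OF bij_is_inj[OF bij_bt] bt_bti])
qed

lemma cont_bt: "continuous_map Yt Yt bt"
  using cont_lift[OF contA continuous_map_id] by (simp add: bt_def id_def)

lemma cont_bti: "continuous_map Yt Yt (inv bt)"
  using cont_lift[OF contAi contAi] by (simp add: inv_bt bti_def)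

lemma bt_pow: "(bt ^^ j) (x, b) = ((\<alpha> ^^ j) x, b \<noteq> (cp j x = -1))"
proof (induction j)
  case 0 then show ?case by simp
next
  case (Suc j)
  show ?case using Suc cp_pm[of j x] sg_pm[of "(\<alpha> ^^ j) x"]
    by (auto simp: bt_def cp_Suc sg_def)
qed

lemma minimal_bt: "minimal_on Yt bt"
  unfolding minimal_on_def
proof (intro allI impI)
  fix A assume A: "closedin Yt A \<and> bt ` A = A"
  show "A = {} \<or> A = topspace Yt"
  proof (cases "A = {}")
    case True then show ?thesis by simp
  next
    case Ane: False
    define fl :: "cantor \<times> bool \<Rightarrow> cantor \<times> bool" where "fl = (\<lambda>(x, b). (x, \<not> b))"
    have cfl: "continuous_map Yt Yt fl"
    proof -
      have "continuous_map Yt (discrete_topology UNIV) (\<lambda>y. \<not> snd y)"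
      proof (rule cont_to_bool)
        fix c
        have "{y \<in> topspace Yt. (\<not> snd y) = c} = UNIV \<times> {\<not> c}" by auto
        moreover have "openin Yt (UNIV \<times> {\<not> c})"
          by (rule yt_open) (metis openin_topspace topspace_Cantor)
        ultimately show "openin Yt {y \<in> topspace Yt. (\<not> snd y) = c}" by simp
      qed
      from continuous_map_pairedI[OF continuous_map_fst this] show ?thesis
        by (simp add: fl_def case_prod_unfold)
    qed
    have "fl ` A = {y. fl y \<in> A}" by (force simp: fl_def)
    then have clFA: "closedin Yt (fl ` A)"
      using closedin_continuous_map_preimage[OF cfl, of A] A by simp
    have bt_fl: "bt (fl y) = fl (bt y)" for y by (auto simp: bt_def fl_def split: prod.splits)
    have invFA: "bt ` (fl ` A) = fl ` A"
      using A by (metis (no_types, lifting) bt_fl image_cong image_image)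
    have fstbt: "fst (bt y) = \<alpha> (fst y)" for y by (auto simp: bt_def split: prod.splits)
    have cm: "closed_map Yt Cantor fst"
      by (rule continuous_imp_closed_map[OF continuous_map_fst compact_Yt Hausdorff_Cantor])
    have proj: "fst ` C = UNIV" if C: "closedin Yt C" "bt ` C = C" "C \<noteq> {}" for C
    proof -
      have "closedin Cantor (fst ` C)" using cm C by (simp add: closed_map_def)
      moreover have "\<alpha> ` (fst ` C) = fst ` C"
        using C(2) by (metis (no_types, lifting) fstbt image_cong image_image)
      ultimately have "fst ` C = {} \<or> fst ` C = UNIV"
        using minimal_onA unfolding minimal_on_def by auto
      then show ?thesis using C(3) by auto
    qed
    show ?thesis
    proof (cases "A \<inter> fl ` A = {}")
      case False
      have "bt ` (A \<inter> fl ` A) = bt ` A \<inter> bt ` (fl ` A)"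
        using bij_bt by (simp add: bij_is_inj image_Int)
      then have "bt ` (A \<inter> fl ` A) = A \<inter> fl ` A" using A invFA by simp
      then have P: "fst ` (A \<inter> fl ` A) = UNIV"
        using proj[of "A \<inter> fl ` A"] False A clFA by (simp add: closedin_Int)
      have "y \<in> A" for y
      proof -
        obtain x b where y: "y = (x, b)" by force
        obtain z where z: "z \<in> A \<inter> fl ` A" "fst z = x" using P by (metis UNIV_I imageE)
        then obtain b' where "(x, b') \<in> A" "(x, \<not> b') \<in> A"
          by (auto simp: fl_def)
        then show ?thesis using y by (cases "b = b'") auto
      qed
      then show ?thesis by auto
    next
      case True
      have P: "fst ` A = UNIV" using proj[of A] A Ane by simp
      define g where "g x = ((x, True) \<in> A)" for x
      have memA: "(x, b) \<in> A \<longleftrightarrow> b = g x" for x b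
      proof -
        have "x \<in> fst ` A" using P by simp
        then obtain z where z: "z \<in> A" "fst z = x" by blast
        then have "(x, snd z) \<in> A" by (metis prod.collapse)
        then have "(x, True) \<in> A \<or> (x, False) \<in> A" by (cases "snd z") auto
        moreover have "\<not> ((x, True) \<in> A \<and> (x, False) \<in> A)"
        proof
          assume "(x, True) \<in> A \<and> (x, False) \<in> A"
          moreover have "fl (x, False) = (x, True)" by (simp add: fl_def)
          ultimately have "(x, True) \<in> A \<inter> fl ` A" by (metis IntI image_eqI)
          then show False using True by auto
        qed
        ultimately show ?thesis unfolding g_def by (cases b) auto
      qed
      have clg: "closedin Cantor {x. g x = c}" for c
      proof -
        have "{x. g x = c} = fst ` (A \<inter> (UNIV \<times> {c}))"
        proof (intro set_eqI iffI)
          fix x assume "x \<in> {x. g x = c}"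
          then have "(x, c) \<in> A \<inter> (UNIV \<times> {c})" using memA by simp
          then show "x \<in> fst ` (A \<inter> (UNIV \<times> {c}))" by (metis fst_conv image_eqI)
        next
          fix x assume "x \<in> fst ` (A \<inter> (UNIV \<times> {c}))"
          then obtain z where z: "z \<in> A" "snd z = c" "fst z = x" by auto
          then have "(x, c) \<in> A" using prod.collapse[of z] by simp
          then show "x \<in> {x. g x = c}" using memA by simp
        qed
        moreover have "closedin Yt (A \<inter> (UNIV \<times> {c}))"
          using A closedin_topspace[of Cantor] by (intro closedin_Int yt_closed) auto
        ultimately show ?thesis using cm by (simp add: closed_map_def)
      qed
      have cg: "continuous_map Cantor (discrete_topology UNIV) g"
      proof (rule cont_to_bool)
        fix c
        have "{x. g x = c} = UNIV - {x. g x = (\<not> c)}" by auto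
        moreover have "openin Cantor (topspace Cantor - {x. g x = (\<not> c)})"
          by (rule openin_diff[OF openin_topspace clg])
        ultimately show "openin Cantor {y \<in> topspace Cantor. g y = c}" by simp
      qed
      have step: "g (\<alpha> x) = (g x \<noteq> orient \<phi> x)" for x
      proof -
        have "(x, g x) \<in> A" using memA by simp
        then have "bt (x, g x) \<in> A" using A by blast
        then show ?thesis using memA by (simp add: bt_def)
      qed
      define f where "f = g \<circ> \<alpha>"
      have "continuous_map Cantor (discrete_topology UNIV) f"
        unfolding f_def by (rule continuous_map_compose[OF contA cg])
      moreover have "orient \<phi> x \<longleftrightarrow> f x \<noteq> f (inv \<alpha> x)" for x
        using step[of x] by (auto simp: f_def)
      ultimately have "orientation_preserving \<alpha> \<phi>"
        unfolding orientation_preserving_def by blast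
      then show ?thesis using nop by simp
    qed
  qed
qed

end

lemma infinite_cantor: "infinite (UNIV :: cantor set)"
proof
  assume fin: "finite (UNIV :: cantor set)"
  have "inj (\<lambda>n::nat. \<lambda>m. m = n)" by (auto simp: inj_def fun_eq_iff)
  then have "finite (UNIV :: nat set)"
    using finite_imageD[of "\<lambda>n::nat. \<lambda>m. m = n" UNIV] fin by (metis finite_subset top_greatest)
  then show False by simp
qed

context setting begin

lemma D12:
  assumes V: "clopen V" "V \<noteq> {}" and s: "s = 1 \<or> s = -1"
  shows "\<exists>p j k. p \<in> V \<and> (\<alpha> ^^ j) p = x0 \<and> cp j p = s \<and> j < k \<and> (\<alpha> ^^ k) p \<in> V \<and> cp k p = -1"
proof -
  define y where "y = (x0, s = -1)"
  have Vo: "openin Cantor V" using V(1) by (simp add: clopen_def)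
  have W0: "openin Yt (V \<times> {False})" "V \<times> {False} \<noteq> {}"
    using yt_open[OF Vo] V(2) by simp_all
  have W1: "openin Yt (V \<times> {True})" "V \<times> {True} \<noteq> {}"
    using yt_open[OF Vo] V(2) by simp_all
  have hb: "\<exists>j\<ge>1. (inv bt ^^ j) y \<in> V \<times> {False}"
    by (rule hit_backward[OF topspace_Yt compact_Yt bij_bt cont_bt cont_bti minimal_bt W0])
  obtain j where j: "j \<ge> 1 \<and> (inv bt ^^ j) y \<in> V \<times> {False}"
    using exE[OF hb] by metis
  define w where "w = (inv bt ^^ j) y"
  have wV: "w \<in> V \<times> {False}" using j unfolding w_def by (rule conjE)
  define p where "p = fst w"
  have p: "(inv bt ^^ j) y = (p, False)" "p \<in> V" using wV prod.collapse[of w] unfolding p_def w_def[symmetric] by (auto simp: mem_Times_iff)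
  have "(bt ^^ j) (p, False) = y" using funpow_inv_cancel0'[OF bij_bt, of j y] p by simp
  then have pj: "(\<alpha> ^^ j) p = x0" "(cp j p = -1) = (s = -1)" by (simp_all add: bt_pow y_def)
  then have cpj: "cp j p = s" using cp_pm[of j p] s by auto
  have hf: "\<exists>k\<ge>1. (bt ^^ k) y \<in> V \<times> {True}"
    by (rule hit_forward[OF topspace_Yt compact_Yt bij_bt cont_bt cont_bti minimal_bt W1])
  obtain k where k: "k \<ge> 1 \<and> (bt ^^ k) y \<in> V \<times> {True}"
    using exE[OF hf] by metis
  have "(bt ^^ (k + j)) (p, False) = (bt ^^ k) y"
    using \<open>(bt ^^ j) (p, False) = y\<close> by (simp add: funpow_add)
  then have "(bt ^^ (k + j)) (p, False) \<in> V \<times> {True}" using k by simp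
  then have "((\<alpha> ^^ (k + j)) p, cp (k + j) p = -1) \<in> V \<times> {True}" by (simp only: bt_pow) simp
  then have "(\<alpha> ^^ (k + j)) p \<in> V" "cp (k + j) p = -1" by simp_all
  then show ?thesis using p pj cpj k
    by (intro exI[of _ p] exI[of _ j] exI[of _ "k + j"]) auto
qed

lemma aper: "(\<alpha> ^^ i) x = x \<Longrightarrow> i = 0"
proof (rule ccontr)
  assume per: "(\<alpha> ^^ i) x = x" and i: "i \<noteq> 0"
  define S where "S = (\<lambda>k. (\<alpha> ^^ k) x) ` {..<i}"
  have fin: "finite S" by (simp add: S_def)
  have cl: "closedin Cantor S" using closedin_Hausdorff_finite[OF Hausdorff_Cantor _ fin] by simp
  have "\<alpha> ` S = S"
  proof
    show "\<alpha> ` S \<subseteq> S"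
    proof
      fix z assume "z \<in> \<alpha> ` S"
      then obtain k where k: "k < i" "z = \<alpha> ((\<alpha> ^^ k) x)" by (auto simp: S_def)
      have mem: "(\<alpha> ^^ m) x \<in> S" if "m < i" for m
        unfolding S_def by (rule image_eqI[where x=m]) (use that in simp_all)
      show "z \<in> S"
      proof (cases "Suc k = i")
        case True
        then have "z = (\<alpha> ^^ 0) x" using k per by (metis funpow.simps(2) funpow_0 o_apply)
        then show ?thesis using mem[of 0] i by simp
      next
        case False
        then have "z = (\<alpha> ^^ Suc k) x" "Suc k < i" using k by auto
        then show ?thesis using mem[of "Suc k"] by simp
      qed
    qed
    show "S \<subseteq> \<alpha> ` S"
    proof
      fix z assume "z \<in> S"
      then obtain k where k: "k < i" "z = (\<alpha> ^^ k) x" by (auto simp: S_def)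
      have mem: "(\<alpha> ^^ m) x \<in> S" if "m < i" for m
        unfolding S_def by (rule image_eqI[where x=m]) (use that in simp_all)
      show "z \<in> \<alpha> ` S"
      proof (cases k)
        case 0
        obtain l where l: "i = Suc l" using i not0_implies_Suc by blast
        have "z = \<alpha> ((\<alpha> ^^ l) x)" using k 0 per l by simp
        then show ?thesis using mem[of l] l by (intro image_eqI) auto
      next
        case (Suc l)
        then have "z = \<alpha> ((\<alpha> ^^ l) x)" "l < i" using k by auto
        then show ?thesis using mem[of l] by (intro image_eqI) auto
      qed
    qed
  qed
  moreover have "S \<noteq> {}" using i by (simp add: S_def lessThan_empty_iff)
  ultimately have "S = UNIV" using minimal_onA cl unfolding minimal_on_def by auto
  then show False using fin infinite_cantor by simp
qed

lemma orbit_inj: "a \<noteq> b \<Longrightarrow> (\<alpha> ^^ a) p \<noteq> (\<alpha> ^^ b) p"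
proof
  assume ab: "a \<noteq> b" and eq: "(\<alpha> ^^ a) p = (\<alpha> ^^ b) p"
  show False
  proof (cases "a < b")
    case True
    then have "(\<alpha> ^^ (b - a)) ((\<alpha> ^^ a) p) = (\<alpha> ^^ a) p"
      using eq by (metis funpow_add le_add_diff_inverse2 less_imp_le o_apply)
    then show False using aper True by fastforce
  next
    case False
    then have "(\<alpha> ^^ (a - b)) ((\<alpha> ^^ b) p) = (\<alpha> ^^ b) p"
      using eq ab by (metis funpow_add le_add_diff_inverse2 not_less o_apply)
    then show False using aper False ab by fastforce
  qed
qed

end

lemma least_level_open:
  fixes P :: "nat \<Rightarrow> cantor set"
  assumes P: "\<And>j. clopen (P j)" and ex: "\<And>x. \<exists>j. x \<in> P j"
  shows "openin Cantor {x. (LEAST j. x \<in> P j) = k}"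
proof -
  have eq: "{x. (LEAST j. x \<in> P j) = k} = P k \<inter> ((\<Inter>i\<in>{..<k}. - P i) \<inter> topspace Cantor)"
  proof (intro set_eqI iffI)
    fix x assume "x \<in> {x. (LEAST j. x \<in> P j) = k}"
    then have "(LEAST j. x \<in> P j) = k" by simp
    moreover have "x \<in> P (LEAST j. x \<in> P j)" using ex[of x] by (rule LeastI_ex)
    moreover have "\<And>i. i < (LEAST j. x \<in> P j) \<Longrightarrow> x \<notin> P i" by (rule not_less_Least)
    ultimately have xk: "x \<in> P k" and xi: "\<And>i. i < k \<Longrightarrow> x \<notin> P i" by blast+
    then show "x \<in> P k \<inter> ((\<Inter>i\<in>{..<k}. - P i) \<inter> topspace Cantor)" by simp
  next
    fix x assume "x \<in> P k \<inter> ((\<Inter>i\<in>{..<k}. - P i) \<inter> topspace Cantor)"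
    then have xk: "x \<in> P k" and xi: "\<And>i. i < k \<Longrightarrow> x \<notin> P i" by simp_all
    have "(LEAST j. x \<in> P j) = k"
    proof (rule Least_equality)
      show "x \<in> P k" by (rule xk)
      fix y assume "x \<in> P y" then show "k \<le> y" using xi not_less by blast
    qed
    then show "x \<in> {x. (LEAST j. x \<in> P j) = k}" by simp
  qed
  have "openin Cantor ((\<Inter>i\<in>{..<k}. - P i) \<inter> topspace Cantor)"
    using clopen_Compl[OF P] by (intro openin_INT) (auto simp: clopen_def)
  then show ?thesis unfolding eq using P[of k] by (simp add: clopen_def openin_Int)
qed

lemma cont_int_map: "continuous_map Cantor euclidean (f :: cantor \<Rightarrow> int) \<Longrightarrow> continuous_map Cantor euclidean (\<lambda>x. (G (f x) :: int))"
  using cont_int_comb2[of f "\<lambda>x. 0" "\<lambda>a b. G a"] by simp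

lemma cont_if_clopen:
  assumes U: "clopen U" and g: "continuous_map Cantor Y g" and h: "continuous_map Cantor Y h"
  shows "continuous_map Cantor Y (\<lambda>x. if x \<in> U then g x else h x)"
proof -
  have "openin Cantor {x. (indicator U x :: int) = k}" for k
    using cont_indicator[OF U] cont_int_iff by blast
  from cont_levels[where l="indicator U :: cantor \<Rightarrow> int" and H="\<lambda>k. if k = 1 then g else h", OF this]
  have "continuous_map Cantor Y (\<lambda>x. (if (indicator U x :: int) = 1 then g else h) x)" using g h by simp
  moreover have "(\<lambda>x. (if (indicator U x :: int) = 1 then g else h) x) = (\<lambda>x. if x \<in> U then g x else h x)"
    by (rule ext) (simp add: indicator_def)
  ultimately show ?thesis by simp
qed

context setting begin

definition ret :: "cantor set \<Rightarrow> cantor \<Rightarrow> nat" where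
  "ret U x = (LEAST j. x \<in> {x. 1 \<le> j \<and> (\<alpha> ^^ j) x \<in> U})"

definition lastv :: "cantor set \<Rightarrow> cantor \<Rightarrow> nat" where
  "lastv U x = (LEAST j. x \<in> {x. (inv \<alpha> ^^ j) x \<in> U})"

lemma ret_ex: "clopen U \<Longrightarrow> U \<noteq> {} \<Longrightarrow> \<exists>j. x \<in> {x. 1 \<le> j \<and> (\<alpha> ^^ j) x \<in> U}"
  using hitA_fwd by auto

lemma lastv_ex: "clopen U \<Longrightarrow> U \<noteq> {} \<Longrightarrow> \<exists>j. x \<in> {x. (inv \<alpha> ^^ j) x \<in> U}"
  using hitA_bwd by auto

lemma ret_props:
  assumes "clopen U" "U \<noteq> {}"
  shows "1 \<le> ret U x" "(\<alpha> ^^ ret U x) x \<in> U" "\<And>i. 1 \<le> i \<Longrightarrow> i < ret U x \<Longrightarrow> (\<alpha> ^^ i) x \<notin> U"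
  using LeastI_ex[OF ret_ex[OF assms, of x]] not_less_Least[of _ "\<lambda>j. x \<in> {x. 1 \<le> j \<and> (\<alpha> ^^ j) x \<in> U}"]
  unfolding ret_def by auto

lemma lastv_props:
  assumes "clopen U" "U \<noteq> {}"
  shows "(inv \<alpha> ^^ lastv U x) x \<in> U" "\<And>i. i < lastv U x \<Longrightarrow> (inv \<alpha> ^^ i) x \<notin> U"
  using LeastI_ex[OF lastv_ex[OF assms, of x]] not_less_Least[of _ "\<lambda>j. x \<in> {x. (inv \<alpha> ^^ j) x \<in> U}"]
  unfolding lastv_def by auto

lemma ret_eqI:
  assumes "1 \<le> k" "(\<alpha> ^^ k) x \<in> U" "\<And>i. 1 \<le> i \<Longrightarrow> i < k \<Longrightarrow> (\<alpha> ^^ i) x \<notin> U"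
  shows "ret U x = k"
  unfolding ret_def using assms by (intro Least_equality) (auto simp: not_less[symmetric])

lemma lastv_eqI:
  assumes "(inv \<alpha> ^^ k) x \<in> U" "\<And>i. i < k \<Longrightarrow> (inv \<alpha> ^^ i) x \<notin> U"
  shows "lastv U x = k"
  unfolding lastv_def using assms by (intro Least_equality) (auto simp: not_less[symmetric])

lemma ret_open: "clopen U \<Longrightarrow> U \<noteq> {} \<Longrightarrow> openin Cantor {x. ret U x = k}"
  unfolding ret_def
proof (rule least_level_open)
  fix j assume U: "clopen U"
  show "clopen {x. 1 \<le> j \<and> (\<alpha> ^^ j) x \<in> U}"
  proof (cases "1 \<le> j")
    case True then show ?thesis using clopen_preimage[OF U continuous_map_funpow[OF contA]] by simp
  next
    case False then show ?thesis by simp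
  qed
qed (rule ret_ex)

lemma lastv_open: "clopen U \<Longrightarrow> U \<noteq> {} \<Longrightarrow> openin Cantor {x. lastv U x = k}"
  unfolding lastv_def
proof (rule least_level_open)
  fix j assume U: "clopen U"
  show "clopen {x. (inv \<alpha> ^^ j) x \<in> U}"
    using clopen_preimage[OF U continuous_map_funpow[OF contAi]] by simp
qed (rule lastv_ex)

lemma inv_pow_Suc: "(inv \<alpha> ^^ Suc i) x = (inv \<alpha> ^^ i) (inv \<alpha> x)"
  by (metis comp_apply funpow_Suc_right)

lemma A_pow_Suc: "(\<alpha> ^^ Suc i) x = (\<alpha> ^^ i) (\<alpha> x)"
  by (metis comp_apply funpow_Suc_right)

lemma prev_return:
  assumes U: "clopen U" "U \<noteq> {}" and x: "x \<in> U"
  defines "u \<equiv> (inv \<alpha> ^^ lastv U (inv \<alpha> x)) (inv \<alpha> x)"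
  shows "u \<in> U" "ret U u = Suc (lastv U (inv \<alpha> x))" "(\<alpha> ^^ Suc (lastv U (inv \<alpha> x))) u = x"
    "(\<alpha> ^^ lastv U (inv \<alpha> x)) u = inv \<alpha> x"
proof -
  let ?L = "lastv U (inv \<alpha> x)"
  show u: "u \<in> U" unfolding u_def by (rule lastv_props(1)[OF U])
  show uL: "(\<alpha> ^^ ?L) u = inv \<alpha> x" unfolding u_def by (rule funpow_inv_cancel0'[OF bijA])
  show ux: "(\<alpha> ^^ Suc ?L) u = x" using uL by simp
  show "ret U u = Suc ?L"
  proof (rule ret_eqI)
    show "(\<alpha> ^^ Suc ?L) u \<in> U" using ux x by simp
    fix i assume i: "1 \<le> i" "i < Suc ?L"
    have "(\<alpha> ^^ i) u = (inv \<alpha> ^^ (?L - i)) (inv \<alpha> x)"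
      unfolding u_def using funpow_inv_cancel'[OF bijA, of i "?L - i" "inv \<alpha> x"] i by simp
    moreover have "?L - i < ?L" using i by simp
    ultimately show "(\<alpha> ^^ i) u \<notin> U" using lastv_props(2)[OF U] by simp
  qed simp
qed

lemma lastv_notin:
  assumes U: "clopen U" "U \<noteq> {}" and x: "x \<notin> U"
  shows "lastv U x = Suc (lastv U (inv \<alpha> x))"
    "(inv \<alpha> ^^ lastv U x) x = (inv \<alpha> ^^ lastv U (inv \<alpha> x)) (inv \<alpha> x)"
proof -
  show l: "lastv U x = Suc (lastv U (inv \<alpha> x))"
  proof (rule lastv_eqI)
    show "(inv \<alpha> ^^ Suc (lastv U (inv \<alpha> x))) x \<in> U"
      unfolding inv_pow_Suc by (rule lastv_props(1)[OF U])
    fix i assume i: "i < Suc (lastv U (inv \<alpha> x))"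
    show "(inv \<alpha> ^^ i) x \<notin> U"
    proof (cases i)
      case 0 then show ?thesis using x by simp
    next
      case (Suc i')
      have "i' < lastv U (inv \<alpha> x)" using i Suc by simp
      then have "(inv \<alpha> ^^ i') (inv \<alpha> x) \<notin> U" by (rule lastv_props(2)[OF U])
      then show ?thesis unfolding Suc inv_pow_Suc .
    qed
  qed
  show "(inv \<alpha> ^^ lastv U x) x = (inv \<alpha> ^^ lastv U (inv \<alpha> x)) (inv \<alpha> x)"
    unfolding l inv_pow_Suc ..
qed

lemma lastv_in: "x \<in> U \<Longrightarrow> lastv U x = 0"
  by (rule lastv_eqI) auto

end

context setting begin

definition cpv :: "cantor set \<Rightarrow> cantor \<Rightarrow> int" where
  "cpv U x = cp (lastv U x) ((inv \<alpha> ^^ lastv U x) x)"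

lemma cpv_pm: "cpv U x = 1 \<or> cpv U x = -1"
  by (simp add: cpv_def cp_pm)

lemma cont_cpv: "clopen U \<Longrightarrow> U \<noteq> {} \<Longrightarrow> continuous_map Cantor euclidean (cpv U)"
  unfolding cpv_def
  by (rule cont_levels[where l="lastv U" and H="\<lambda>k x. cp k ((inv \<alpha> ^^ k) x)"])
     (auto intro: lastv_open cont_int_comp[OF cont_cp continuous_map_funpow[OF contAi]])

lemma R1:
  assumes U: "clopen U" "U \<noteq> {}" and x: "x \<notin> U"
  shows "cpv U x = cpv U (inv \<alpha> x) * sg (inv \<alpha> x)"
proof -
  let ?L = "lastv U (inv \<alpha> x)"
  let ?u = "(inv \<alpha> ^^ ?L) (inv \<alpha> x)"
  have "cpv U x = cp (Suc ?L) ?u" unfolding cpv_def using lastv_notin[OF U x] by simp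
  also have "\<dots> = cp ?L ?u * sg ((\<alpha> ^^ ?L) ?u)" by (rule cp_Suc)
  also have "(\<alpha> ^^ ?L) ?u = inv \<alpha> x" by (rule funpow_inv_cancel0'[OF bijA])
  finally show ?thesis by (simp add: cpv_def)
qed

lemma R2:
  assumes U: "clopen U" "U \<noteq> {}" and x: "x \<in> U" and odd: "\<forall>u\<in>U. cp (ret U u) u = -1"
  shows "cpv U x = 1" "cpv U (inv \<alpha> x) * sg (inv \<alpha> x) = -1"
proof -
  show "cpv U x = 1" using x by (simp add: cpv_def lastv_in)
  let ?L = "lastv U (inv \<alpha> x)"
  let ?u = "(inv \<alpha> ^^ ?L) (inv \<alpha> x)"
  have "cp (Suc ?L) ?u = -1" using prev_return[OF U x] odd by metis
  moreover have "cp (Suc ?L) ?u = cp ?L ?u * sg (inv \<alpha> x)"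
    using cp_Suc prev_return(4)[OF U x] by metis
  ultimately show "cpv U (inv \<alpha> x) * sg (inv \<alpha> x) = -1" by (simp add: cpv_def)
qed

lemma single_K1:
  fixes x0 :: cantor
  assumes U: "clopen U" "U \<noteq> {}" and odd: "\<forall>u\<in>U. cp (ret U u) u = -1"
  defines "c0 \<equiv> (if cpv U x0 = 1 then 1 else 0 :: int)"
  shows "K1_equiv \<alpha> \<phi> x0 (indicator U) (\<lambda>x. (2 * c0 - 1) * hphi \<alpha> \<phi> x)"
proof -
  define f where "f x = (if cpv U x = 1 then 1 else 0) - c0" for x
  have fCZ: "f \<in> CZ"
    unfolding CZ_def f_def using cont_int_map[OF cont_cpv[OF U], of "\<lambda>a. (if a = 1 then 1 else 0) - c0"]
    by simp
  have f0: "f x0 = 0" by (simp add: f_def c0_def)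
  have "indicator U x - (2 * c0 - 1) * hphi \<alpha> \<phi> x = f x - astar \<alpha> \<phi> f x" for x
  proof -
    have c0: "c0 = 0 \<or> c0 = 1" by (simp add: c0_def)
    have ast: "astar \<alpha> \<phi> f x = sg (inv \<alpha> x) * f (inv \<alpha> x)" by (simp add: astar_def sg_def)
    have hp: "hphi \<alpha> \<phi> x = (if sg (inv \<alpha> x) = -1 then 1 else 0)" by (simp add: hphi_def sg_def)
    show ?thesis
    proof (cases "x \<in> U")
      case True
      note r = R2[OF U True odd]
      show ?thesis unfolding ast hp f_def using r c0 cpv_pm[of U "inv \<alpha> x"] sg_pm[of "inv \<alpha> x"] True
        by (auto simp: indicator_def)
    next
      case False
      note r = R1[OF U False]
      show ?thesis unfolding ast hp f_def using r c0 cpv_pm[of U "inv \<alpha> x"] sg_pm[of "inv \<alpha> x"] False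
        by (auto simp: indicator_def)
    qed
  qed
  then show ?thesis unfolding K1_equiv_def using fCZ f0 by blast
qed

definition sig :: "cantor set \<Rightarrow> cantor \<Rightarrow> cantor" where
  "sig U x = (if x \<in> U then (\<alpha> ^^ ret U x) x else x)"

definition nn :: "cantor set \<Rightarrow> cantor \<Rightarrow> int" where
  "nn U x = (if x \<in> U then int (ret U x) else 0)"

lemma homeo_of_bij:
  assumes "continuous_map Cantor Cantor g" "bij g"
  shows "homeomorphic_map Cantor Cantor g"
proof (rule bijective_closed_imp_homeomorphic_map[OF assms(1)])
  show "closed_map Cantor Cantor g"
    by (rule continuous_imp_closed_map[OF assms(1) compact_Cantor Hausdorff_Cantor])
  show "g ` topspace Cantor = topspace Cantor" using assms(2) by (simp add: bij_is_surj)
  show "inj_on g (topspace Cantor)" using assms(2) by (simp add: bij_is_inj)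
qed

lemma single_cocycle:
  assumes U: "clopen U" "U \<noteq> {}"
  shows "full_group_cocycle \<alpha> (sig U) (nn U)" "\<forall>x\<in>U. sig U x \<in> U"
    "\<forall>x. x \<notin> U \<longrightarrow> sig U x = x \<and> nn U x = 0" "\<forall>x. nn U x \<ge> 0"
    "\<forall>x\<in>U. nat (nn U x) = ret U x"
proof -
  show in_U: "\<forall>x\<in>U. sig U x \<in> U" using ret_props(2)[OF U] by (simp add: sig_def)
  show "\<forall>x. x \<notin> U \<longrightarrow> sig U x = x \<and> nn U x = 0" by (simp add: sig_def nn_def)
  show "\<forall>x. nn U x \<ge> 0" by (simp add: nn_def)
  show "\<forall>x\<in>U. nat (nn U x) = ret U x" by (simp add: nn_def)
  have nCZ: "nn U \<in> CZ"
  proof -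
    have "continuous_map Cantor euclidean (\<lambda>x. int k * indicator U x)" for k
      using cont_int_map[OF cont_indicator[OF U(1)], of "\<lambda>a. int k * a"] by simp
    then have "continuous_map Cantor euclidean (\<lambda>x. int (ret U x) * indicator U x)"
      using cont_levels[where l="ret U" and H="\<lambda>k x. int k * indicator U x"] ret_open[OF U] by simp
    moreover have "(\<lambda>x. int (ret U x) * indicator U x) = nn U" by (auto simp: nn_def indicator_def)
    ultimately show ?thesis by (simp add: CZ_def)
  qed
  have cont: "continuous_map Cantor Cantor (sig U)"
  proof -
    have "continuous_map Cantor Cantor (\<lambda>x. if x \<in> U then (\<alpha> ^^ k) x else x)" for k
      by (rule cont_if_clopen[OF U(1) continuous_map_funpow[OF contA]]) (simp add: continuous_map_id[unfolded id_def])
    then show ?thesis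
      using cont_levels[where l="ret U" and H="\<lambda>k x. if x \<in> U then (\<alpha> ^^ k) x else x"] ret_open[OF U]
      by (simp add: sig_def[abs_def])
  qed
  have inj: "inj (sig U)"
  proof (rule injI)
    fix x x' assume eq: "sig U x = sig U x'"
    show "x = x'"
    proof (cases "x \<in> U"; cases "x' \<in> U")
      assume a: "x \<in> U" "x' \<notin> U"
      then have "sig U x \<in> U" "sig U x' = x'" using in_U by (simp_all add: sig_def)
      then show ?thesis using eq a by simp
    next
      assume a: "x \<notin> U" "x' \<in> U"
      then have "sig U x' \<in> U" "sig U x = x" using in_U by (simp_all add: sig_def)
      then show ?thesis using eq a by simp
    next
      assume "x \<notin> U" "x' \<notin> U" then show ?thesis using eq by (simp add: sig_def)
    next
      assume xU: "x \<in> U" and xU': "x' \<in> U"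
      let ?a = "ret U x" and ?b = "ret U x'"
      have e: "(\<alpha> ^^ ?a) x = (\<alpha> ^^ ?b) x'" using eq xU xU' by (simp add: sig_def)
      have gen: "z = z'" if zU: "z \<in> U" "z' \<in> U" and ez: "(\<alpha> ^^ ret U z) z = (\<alpha> ^^ ret U z') z'"
        and le: "ret U z \<le> ret U z'" for z z'
      proof (rule ccontr)
        assume ne: "z \<noteq> z'"
        have "(\<alpha> ^^ ret U z) z = (\<alpha> ^^ ret U z) ((\<alpha> ^^ (ret U z' - ret U z)) z')"
          using ez le by (metis funpow_add le_add_diff_inverse o_apply)
        then have zz: "z = (\<alpha> ^^ (ret U z' - ret U z)) z'"
          using inj_fn[OF bij_is_inj[OF bijA]] by (metis injD)
        then have "ret U z' - ret U z \<noteq> 0" using ne by auto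
        then have d1: "1 \<le> ret U z' - ret U z" by linarith
        have d2: "ret U z' - ret U z < ret U z'" using ret_props(1)[OF U, of z] le by linarith
        have "(\<alpha> ^^ (ret U z' - ret U z)) z' \<notin> U" by (rule ret_props(3)[OF U d1 d2])
        then show False using zz zU by simp
      qed
      show ?thesis
      proof (cases "?a \<le> ?b")
        case True then show ?thesis using gen[OF xU xU' e] by simp
      next
        case False then show ?thesis using gen[OF xU' xU e[symmetric]] by simp
      qed
    qed
  qed
  have surj: "surj (sig U)"
  proof -
    have "y \<in> range (sig U)" for y
    proof (cases "y \<in> U")
      case True
      let ?u = "(inv \<alpha> ^^ lastv U (inv \<alpha> y)) (inv \<alpha> y)"
      have "sig U ?u = y" using prev_return[OF U True] by (simp add: sig_def)
      then show ?thesis by (metis rangeI)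
    next
      case False
      then have "sig U y = y" by (simp add: sig_def)
      then show ?thesis by (metis rangeI)
    qed
    then show ?thesis by auto
  qed
  have "homeomorphic_map Cantor Cantor (sig U)"
    by (rule homeo_of_bij[OF cont]) (simp add: bij_def inj surj)
  moreover have "sig U x = zpow \<alpha> (inv \<alpha>) (nn U x) x" for x
    by (simp add: sig_def nn_def zpow_def)
  ultimately show "full_group_cocycle \<alpha> (sig U) (nn U)"
    using nCZ by (simp add: full_group_cocycle_def)
qed

end

context setting begin

lemma astar_pow: "(astar \<alpha> \<phi> ^^ k) g y = cp k ((inv \<alpha> ^^ k) y) * g ((inv \<alpha> ^^ k) y)"
proof (induction k arbitrary: g)
  case 0 then show ?case by simp
next
  case (Suc k)
  have "(astar \<alpha> \<phi> ^^ Suc k) g y = (astar \<alpha> \<phi> ^^ k) (astar \<alpha> \<phi> g) y"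
    by (metis comp_apply funpow_Suc_right)
  also have "\<dots> = cp k ((inv \<alpha> ^^ k) y) * astar \<alpha> \<phi> g ((inv \<alpha> ^^ k) y)" by (rule Suc)
  also have "\<dots> = cp k ((inv \<alpha> ^^ k) y) * sg ((inv \<alpha> ^^ Suc k) y) * g ((inv \<alpha> ^^ Suc k) y)"
    by (simp add: astar_def sg_def inv_pow_Suc[symmetric, of k y] del: funpow.simps)
      (metis comp_apply funpow.simps(2) funpow_swap1)
  also have "cp (Suc k) ((inv \<alpha> ^^ Suc k) y) = sg ((inv \<alpha> ^^ Suc k) y) * cp k ((inv \<alpha> ^^ k) y)"
    by (simp add: cp_Suc' del: funpow.simps) (metis A_inv_A comp_apply funpow.simps(2))
  ultimately show ?case by (simp add: ac_simps del: funpow.simps)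
qed

lemma sstar_formula:
  assumes coc: "full_group_cocycle \<alpha> \<sigma> n" and pos: "\<forall>x. n x \<ge> 0"
  shows "sstar \<alpha> \<phi> n g (\<sigma> z) = cp (nat (n z)) z * g z"
proof -
  have hom: "homeomorphic_map Cantor Cantor \<sigma>" and nCZ: "n \<in> CZ"
    and sz: "\<And>x. \<sigma> x = zpow \<alpha> (inv \<alpha>) (n x) x"
    using coc by (auto simp: full_group_cocycle_def)
  have injs: "inj \<sigma>" using hom unfolding homeomorphic_eq_everything_map by simp
  have sz': "\<sigma> x = (\<alpha> ^^ nat (n x)) x" for x using sz[of x] pos by (simp add: zpow_def)
  define T where "T k = zpow (astar \<alpha> \<phi>) (astar_inv \<alpha> \<phi>) k (\<lambda>x. g x * indicator (n -` {k}) x) (\<sigma> z)" for k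
  have Tk: "T k = (if k = n z then cp (nat (n z)) z * g z else 0)" if k: "k \<in> range n" for k
  proof -
    have k0: "k \<ge> 0" using k pos by auto
    define w where "w = (inv \<alpha> ^^ nat k) (\<sigma> z)"
    have T: "T k = cp (nat k) w * (g w * indicator (n -` {k}) w)"
      unfolding T_def w_def using k0 by (simp add: zpow_def astar_pow)
    show ?thesis
    proof (cases "k = n z")
      case True
      then have "w = z" unfolding w_def sz' using funpow_inv_cancel0[OF bijA] by simp
      then show ?thesis using T True by simp
    next
      case False
      have "n w \<noteq> k"
      proof
        assume nw: "n w = k"
        have "\<sigma> w = (\<alpha> ^^ nat k) w" using sz' nw by simp
        also have "\<dots> = \<sigma> z" unfolding w_def by (rule funpow_inv_cancel0'[OF bijA])
        finally have "w = z" using injs by (simp add: inj_eq)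
        then show False using nw False by simp
      qed
      then show ?thesis using T False by (simp add: indicator_def)
    qed
  qed
  have "sstar \<alpha> \<phi> n g (\<sigma> z) = (\<Sum>k\<in>range n. T k)" by (simp add: sstar_def T_def)
  also have "\<dots> = (\<Sum>k\<in>range n. if k = n z then cp (nat (n z)) z * g z else 0)"
    by (rule sum.cong) (simp_all add: Tk)
  also have "\<dots> = cp (nat (n z)) z * g z"
    using CZ_finite_range[OF nCZ] by (simp add: sum.delta)
  finally show ?thesis .
qed

definition good :: "cantor \<Rightarrow> cantor set \<Rightarrow> cantor set \<Rightarrow> int \<Rightarrow> bool" where
  "good x0 V U m \<longleftrightarrow> clopen U \<and> U \<subseteq> V \<and> K1_equiv \<alpha> \<phi> x0 (indicator U) (\<lambda>x. m * hphi \<alpha> \<phi> x) \<and>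
     (\<exists>\<sigma> n. full_group_cocycle \<alpha> \<sigma> n \<and> (\<forall>x. x \<notin> U \<longrightarrow> \<sigma> x = x \<and> n x = 0) \<and> (\<forall>x. n x \<ge> 0) \<and>
        (\<forall>x\<in>U. \<sigma> x \<in> U \<and> cp (nat (n x)) x = -1))"

lemma good_mono: "good x0 V U m \<Longrightarrow> V \<subseteq> V' \<Longrightarrow> good x0 V' U m"
  unfolding good_def by blast

lemma good_zero: "good x0 V {} 0"
proof -
  have "full_group_cocycle \<alpha> id (\<lambda>x. 0)"
    by (simp add: full_group_cocycle_def CZ_def zpow_def homeomorphic_map_id)
  moreover have "K1_equiv \<alpha> \<phi> x0 (indicator {}) (\<lambda>x. 0 * hphi \<alpha> \<phi> x)"
    unfolding K1_equiv_def by (intro bexI[of _ "\<lambda>x. 0"]) (auto simp: astar_def CZ_def)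
  ultimately show ?thesis unfolding good_def by (intro conjI exI) auto
qed

lemma good_comb:
  assumes g1: "good x0 V1 U1 m1" and g2: "good x0 V2 U2 m2" and disj: "V1 \<inter> V2 = {}"
  shows "good x0 (V1 \<union> V2) (U1 \<union> U2) (m1 + m2)"
proof -
  obtain \<sigma>1 n1 where s1: "full_group_cocycle \<alpha> \<sigma>1 n1" "\<forall>x. x \<notin> U1 \<longrightarrow> \<sigma>1 x = x \<and> n1 x = 0"
      "\<forall>x. n1 x \<ge> 0" "\<forall>x\<in>U1. \<sigma>1 x \<in> U1 \<and> cp (nat (n1 x)) x = -1"
    and U1: "clopen U1" "U1 \<subseteq> V1" and K1: "K1_equiv \<alpha> \<phi> x0 (indicator U1) (\<lambda>x. m1 * hphi \<alpha> \<phi> x)"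
    using g1 unfolding good_def by blast
  obtain \<sigma>2 n2 where s2: "full_group_cocycle \<alpha> \<sigma>2 n2" "\<forall>x. x \<notin> U2 \<longrightarrow> \<sigma>2 x = x \<and> n2 x = 0"
      "\<forall>x. n2 x \<ge> 0" "\<forall>x\<in>U2. \<sigma>2 x \<in> U2 \<and> cp (nat (n2 x)) x = -1"
    and U2: "clopen U2" "U2 \<subseteq> V2" and K2: "K1_equiv \<alpha> \<phi> x0 (indicator U2) (\<lambda>x. m2 * hphi \<alpha> \<phi> x)"
    using g2 unfolding good_def by blast
  have d: "U1 \<inter> U2 = {}" using U1 U2 disj by auto
  obtain f1 where f1: "f1 \<in> CZ" "f1 x0 = 0" "\<forall>x. indicator U1 x - m1 * hphi \<alpha> \<phi> x = f1 x - astar \<alpha> \<phi> f1 x"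
    using K1 unfolding K1_equiv_def by blast
  obtain f2 where f2: "f2 \<in> CZ" "f2 x0 = 0" "\<forall>x. indicator U2 x - m2 * hphi \<alpha> \<phi> x = f2 x - astar \<alpha> \<phi> f2 x"
    using K2 unfolding K1_equiv_def by blast
  have K: "K1_equiv \<alpha> \<phi> x0 (indicator (U1 \<union> U2)) (\<lambda>x. (m1 + m2) * hphi \<alpha> \<phi> x)"
    unfolding K1_equiv_def
  proof (intro bexI[of _ "\<lambda>x. f1 x + f2 x"] conjI allI)
    show "(\<lambda>x. f1 x + f2 x) \<in> CZ" using f1 f2 cont_int_comb2[of f1 f2 "(+)"] by (simp add: CZ_def)
    show "f1 x0 + f2 x0 = 0" using f1 f2 by simp
    fix x
    have "indicator (U1 \<union> U2) x = (indicator U1 x + indicator U2 x :: int)"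
      using d by (auto simp: indicator_def)
    moreover have "astar \<alpha> \<phi> (\<lambda>x. f1 x + f2 x) x = astar \<alpha> \<phi> f1 x + astar \<alpha> \<phi> f2 x"
      by (simp add: astar_def algebra_simps)
    ultimately show "indicator (U1 \<union> U2) x - (m1 + m2) * hphi \<alpha> \<phi> x =
        f1 x + f2 x - astar \<alpha> \<phi> (\<lambda>x. f1 x + f2 x) x"
      using f1(3) f2(3) by (simp add: algebra_simps)
  qed
  define \<sigma> where "\<sigma> = \<sigma>1 \<circ> \<sigma>2"
  define n where "n x = n1 x + n2 x" for x
  have "full_group_cocycle \<alpha> \<sigma> n"
    unfolding full_group_cocycle_def
  proof (intro conjI allI)
    show "homeomorphic_map Cantor Cantor \<sigma>" unfolding \<sigma>_def
      using s1(1) s2(1) by (auto simp: full_group_cocycle_def intro: homeomorphic_map_compose)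
    show "n \<in> CZ" using s1(1) s2(1) cont_int_comb2[of n1 n2 "(+)"]
      by (simp add: full_group_cocycle_def CZ_def n_def[abs_def])
    fix x
    have z1: "\<sigma>1 x = zpow \<alpha> (inv \<alpha>) (n1 x) x" and z2: "\<sigma>2 x = zpow \<alpha> (inv \<alpha>) (n2 x) x"
      using s1(1) s2(1) by (auto simp: full_group_cocycle_def)
    show "\<sigma> x = zpow \<alpha> (inv \<alpha>) (n x) x"
    proof (cases "x \<in> U2")
      case True
      then have "x \<notin> U1" "\<sigma>2 x \<notin> U1" using d s2(4) by auto
      then show ?thesis using s1(2) z2 by (simp add: \<sigma>_def n_def)
    next
      case False
      then show ?thesis using s2(2) z1 by (simp add: \<sigma>_def n_def)
    qed
  qed
  moreover have "\<forall>x. x \<notin> U1 \<union> U2 \<longrightarrow> \<sigma> x = x \<and> n x = 0" using s1(2) s2(2) by (simp add: \<sigma>_def n_def)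
  moreover have "\<forall>x. n x \<ge> 0" using s1(3) s2(3) by (simp add: n_def)
  moreover have "\<forall>x\<in>U1 \<union> U2. \<sigma> x \<in> U1 \<union> U2 \<and> cp (nat (n x)) x = -1"
  proof
    fix x assume "x \<in> U1 \<union> U2"
    then show "\<sigma> x \<in> U1 \<union> U2 \<and> cp (nat (n x)) x = -1"
    proof
      assume x: "x \<in> U1"
      then have "x \<notin> U2" using d by auto
      then show ?thesis using x s1(4) s2(2) by (simp add: \<sigma>_def n_def)
    next
      assume x: "x \<in> U2"
      then have "x \<notin> U1" "\<sigma>2 x \<notin> U1" using d s2(4) by auto
      then show ?thesis using x s1(2) s2(4) by (simp add: \<sigma>_def n_def)
    qed
  qed
  ultimately show ?thesis unfolding good_def using K U1 U2 clopen_Un by blast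
qed

end

context setting begin

lemma base:
  fixes x0 :: cantor
  assumes V: "clopen V" "V \<noteq> {}" and s: "s = 1 \<or> s = -1"
  shows "\<exists>U. good x0 V U s"
proof -
  obtain p j k where pjk: "p \<in> V" "(\<alpha> ^^ j) p = x0" "cp j p = s" "j < k" "(\<alpha> ^^ k) p \<in> V" "cp k p = -1"
    using D12[OF V s, of x0] by blast
  define S where "S = (\<lambda>i. (\<alpha> ^^ i) p) ` {1..<k}"
  have finS: "finite S" by (simp add: S_def)
  have pS: "p \<notin> S"
  proof
    assume "p \<in> S"
    then obtain i where i: "1 \<le> i" "(\<alpha> ^^ i) p = (\<alpha> ^^ 0) p" by (auto simp: S_def)
    then show False using orbit_inj[of i 0 p] by simp
  qed
  have qS: "(\<alpha> ^^ k) p \<notin> S"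
  proof
    assume "(\<alpha> ^^ k) p \<in> S"
    then obtain i where i: "i < k" "(\<alpha> ^^ i) p = (\<alpha> ^^ k) p" by (auto simp: S_def)
    then show False using orbit_inj[of i k p] by simp
  qed
  obtain Cp where Cp: "clopen Cp" "p \<in> Cp" "Cp \<inter> S = {}" using clopen_avoid[OF finS pS] by blast
  obtain Cq where Cq: "clopen Cq" "(\<alpha> ^^ k) p \<in> Cq" "Cq \<inter> S = {}" using clopen_avoid[OF finS qS] by blast
  define B where "B = V \<inter> (Cp \<union> Cq)"
  have clB: "clopen B" unfolding B_def using V(1) Cp(1) Cq(1) by (simp add: clopen_Int clopen_Un)
  have pB: "p \<in> B" and qB: "(\<alpha> ^^ k) p \<in> B" and BV: "B \<subseteq> V"
    using pjk Cp Cq by (auto simp: B_def)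
  have Bne: "B \<noteq> {}" using pB by auto
  have notB: "(\<alpha> ^^ i) p \<notin> B" if "1 \<le> i" "i < k" for i
  proof -
    have "(\<alpha> ^^ i) p \<in> S" unfolding S_def using that by (intro image_eqI[where x=i]) auto
    then show ?thesis using Cp(3) Cq(3) by (auto simp: B_def)
  qed
  have retp: "ret B p = k"
    by (rule ret_eqI) (use pjk qB notB in auto)
  define U where "U = B \<inter> {x. cp (ret B x) x \<in> {-1}}"
  have contc: "continuous_map Cantor euclidean (\<lambda>x. cp (ret B x) x)"
    by (rule cont_levels[where l="ret B" and H=cp]) (auto intro: ret_open[OF clB Bne] cont_cp)
  have clU: "clopen U" unfolding U_def by (rule clopen_Int[OF clB cont_int_clopen[OF contc]])
  have pU: "p \<in> U" unfolding U_def using pB retp pjk(6) by simp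
  have UB: "U \<subseteq> B" by (auto simp: U_def)
  have Une: "U \<noteq> {}" using pU by auto
  have claim: "\<forall>x. x \<in> B \<longrightarrow> ret U x = n \<longrightarrow> cp (ret U x) x = (if x \<in> U then -1 else 1)" for n
  proof (induction n rule: less_induct)
    case (less R)
    show ?case
    proof (intro allI impI)
      fix x assume xB: "x \<in> B" and xR: "ret U x = R"
      let ?r = "ret B x"
      have R1: "1 \<le> R" using ret_props(1)[OF clU Une, of x] xR by simp
      have RU: "(\<alpha> ^^ R) x \<in> U" using ret_props(2)[OF clU Une, of x] xR by simp
      have rR: "?r \<le> R"
      proof (rule ccontr)
        assume "\<not> ?r \<le> R"
        then have "(\<alpha> ^^ R) x \<notin> B" using ret_props(3)[OF clB Bne, of R x] R1 by simp
        then show False using RU UB by auto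
      qed
      have xU: "x \<in> U \<longleftrightarrow> cp ?r x = -1" using xB by (simp add: U_def)
      show "cp (ret U x) x = (if x \<in> U then -1 else 1)"
      proof (cases "?r = R")
        case True
        then show ?thesis using xU xR cp_pm[of ?r x] by auto
      next
        case False
        then have rlt: "?r < R" using rR by simp
        have r1: "1 \<le> ?r" by (rule ret_props(1)[OF clB Bne])
        define y where "y = (\<alpha> ^^ ?r) x"
        have yB: "y \<in> B" unfolding y_def by (rule ret_props(2)[OF clB Bne])
        have yU: "y \<notin> U" unfolding y_def using ret_props(3)[OF clU Une, of ?r x] r1 rlt xR by simp
        have shift: "(\<alpha> ^^ i) y = (\<alpha> ^^ (i + ?r)) x" for i
          unfolding y_def by (simp add: funpow_add)
        have retY: "ret U y = R - ?r"
        proof (rule ret_eqI)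
          show "1 \<le> R - ?r" using rlt by simp
          show "(\<alpha> ^^ (R - ?r)) y \<in> U" using RU rlt by (simp add: shift)
          fix i assume "1 \<le> i" "i < R - ?r"
          then have "1 \<le> i + ?r" "i + ?r < ret U x" using xR by auto
          then have "(\<alpha> ^^ (i + ?r)) x \<notin> U" by (rule ret_props(3)[OF clU Une])
          then show "(\<alpha> ^^ i) y \<notin> U" by (simp add: shift)
        qed
        have "R - ?r < R" using r1 rlt by simp
        then have "cp (ret U y) y = (if y \<in> U then -1 else 1)" using less yB retY by blast
        then have cy: "cp (R - ?r) y = 1" using yU retY by simp
        have "cp R x = cp (?r + (R - ?r)) x" using rlt by simp
        also have "\<dots> = cp ?r x * cp (R - ?r) y" unfolding y_def by (rule cp_add)
        finally have "cp R x = cp ?r x" using cy by simp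
        then show ?thesis using xU xR cp_pm[of ?r x] by auto
      qed
    qed
  qed
  have odd: "\<forall>u\<in>U. cp (ret U u) u = -1" using claim UB by auto
  have lv: "lastv U x0 = j"
  proof (rule lastv_eqI)
    show "(inv \<alpha> ^^ j) x0 \<in> U" using pU pjk(2) funpow_inv_cancel0[OF bijA, of j p] by simp
    fix i assume i: "i < j"
    have "(inv \<alpha> ^^ i) ((\<alpha> ^^ (i + (j - i))) p) = (\<alpha> ^^ (j - i)) p"
      by (rule funpow_inv_cancel[OF bijA])
    then have "(inv \<alpha> ^^ i) x0 = (\<alpha> ^^ (j - i)) p" using i pjk(2) by simp
    moreover have "(\<alpha> ^^ (j - i)) p \<notin> B" using notB[of "j - i"] i pjk(4) by simp
    ultimately show "(inv \<alpha> ^^ i) x0 \<notin> U" using UB by auto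
  qed
  have cpv0: "cpv U x0 = s"
    unfolding cpv_def lv using pjk(2,3) funpow_inv_cancel0[OF bijA, of j p] by simp
  have K: "K1_equiv \<alpha> \<phi> x0 (indicator U) (\<lambda>x. s * hphi \<alpha> \<phi> x)"
  proof -
    have "(2 * (if cpv U x0 = 1 then 1 else 0) - 1 :: int) = s" using cpv0 s by auto
    then show ?thesis using single_K1[OF clU Une odd, of x0] by simp
  qed
  note sc = single_cocycle[OF clU Une]
  have "\<forall>x\<in>U. sig U x \<in> U \<and> cp (nat (nn U x)) x = -1" using sc(2,5) odd by simp
  then have "good x0 V U s"
    unfolding good_def using clU UB BV K sc(1,3,4) by blast
  then show ?thesis by blast
qed

lemma all_n:
  fixes x0 :: cantor
  assumes s: "s = 1 \<or> s = -1"
  shows "\<forall>V. clopen V \<and> V \<noteq> {} \<longrightarrow> (\<exists>U. good x0 V U (int n * s))"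
proof (induction n)
  case 0 then show ?case using good_zero by auto
next
  case (Suc n)
  show ?case
  proof (intro allI impI)
    fix V assume V: "clopen V \<and> V \<noteq> {}"
    obtain V1 V2 where sp: "clopen V1" "clopen V2" "V1 \<noteq> {}" "V2 \<noteq> {}" "V1 \<inter> V2 = {}" "V1 \<union> V2 \<subseteq> V"
      using clopen_split V by blast
    obtain U1 where U1: "good x0 V1 U1 (int n * s)" using Suc sp by blast
    obtain U2 where U2: "good x0 V2 U2 s" using base[OF sp(2) sp(4) s] by blast
    have "good x0 (V1 \<union> V2) (U1 \<union> U2) (int n * s + s)" by (rule good_comb[OF U1 U2 sp(5)])
    then have "good x0 V (U1 \<union> U2) (int (Suc n) * s)" using sp(6) good_mono by (simp add: algebra_simps)
    then show "\<exists>U. good x0 V U (int (Suc n) * s)" by blast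
  qed
qed

lemma all_m:
  fixes x0 :: cantor
  assumes "clopen V" "V \<noteq> {}"
  shows "\<exists>U. good x0 V U m"
proof (cases "m \<ge> 0")
  case True
  then have "m = int (nat m) * 1" by simp
  then show ?thesis using all_n[of 1 x0 "nat m"] assms by metis
next
  case False
  then have "m = int (nat (- m)) * (-1)" by simp
  then show ?thesis using all_n[of "-1" x0 "nat (- m)"] assms by metis
qed

end

theorem lemma6p3:
  fixes \<alpha> :: "cantor \<Rightarrow> cantor" and \<phi> :: "cantor \<Rightarrow> complex \<Rightarrow> complex"
    and x0 :: cantor and m :: int and V :: "cantor set"
  assumes "minimal_homeo Cantor \<alpha>"
    and "\<forall>x. circle_isom (\<phi> x)"
    and "continuous_map (prod_topology Cantor (top_of_set Circ)) euclidean (\<lambda>(x, t). \<phi> x t)"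
    and "minimal_homeo (prod_topology Cantor (top_of_set Circ)) (skew \<alpha> \<phi>)"
    and "\<not> orientation_preserving \<alpha> \<phi>"
    and "openin Cantor V" and "closedin Cantor V" and "V \<noteq> {}"
  shows "\<exists>U. openin Cantor U \<and> closedin Cantor U \<and> U \<subseteq> V \<and>
           K1_equiv \<alpha> \<phi> x0 (indicator U) (\<lambda>x. m * hphi \<alpha> \<phi> x) \<and>
           (\<exists>\<sigma> n. full_group_cocycle \<alpha> \<sigma> n \<and> (\<forall>x. x \<notin> U \<longrightarrow> \<sigma> x = x) \<and>
              sstar \<alpha> \<phi> n (indicator U) = (\<lambda>x. - indicator U x))"
proof -
  interpret setting \<alpha> \<phi>
    using assms(1,2,3,5) by (unfold_locales) auto
  have V: "clopen V" using assms(6,7) by (simp add: clopen_def)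
  obtain U where g: "good x0 V U m" using all_m[OF V assms(8)] by blast
  then obtain \<sigma> n where coc: "full_group_cocycle \<alpha> \<sigma> n" and out: "\<forall>x. x \<notin> U \<longrightarrow> \<sigma> x = x \<and> n x = 0"
      and pos: "\<forall>x. n x \<ge> 0" and inU: "\<forall>x\<in>U. \<sigma> x \<in> U \<and> cp (nat (n x)) x = -1"
      and clU: "clopen U" and UV: "U \<subseteq> V" and K: "K1_equiv \<alpha> \<phi> x0 (indicator U) (\<lambda>x. m * hphi \<alpha> \<phi> x)"
    unfolding good_def by blast
  have "homeomorphic_map Cantor Cantor \<sigma>" using coc unfolding full_group_cocycle_def by blast
  then have surjs: "surj \<sigma>" unfolding homeomorphic_eq_everything_map by simp
  have "sstar \<alpha> \<phi> n (indicator U) y = - indicator U y" for y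
  proof -
    obtain z where z: "y = \<sigma> z" using surjs by (metis surjD)
    have f: "sstar \<alpha> \<phi> n (indicator U) (\<sigma> z) = cp (nat (n z)) z * indicator U z"
      by (rule sstar_formula[OF coc pos])
    show ?thesis
    proof (cases "z \<in> U")
      case True then show ?thesis using f z inU by (simp add: indicator_def)
    next
      case False then show ?thesis using f z out by (simp add: indicator_def)
    qed
  qed
  then have "sstar \<alpha> \<phi> n (indicator U) = (\<lambda>x. - indicator U x)" by (rule ext)
  then show ?thesis using clU UV K coc out unfolding clopen_def by blast
qed

end
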